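(* Let $p>1$ and $l\ge 0$ be constants and let $q$ satisfy $1/p+1/q=1$. Let $\tau$ be an $(\mathcal F_t)_{t\ge 0}$-stopping time and let $\xi$ be a non-negative random variable. Let $a(t)$ and $x(t)$ be non-negative $(\mathcal F_t)_{t\ge0}$-progressively measurable processes. Assume that $a(t)>\epsilon$ for some constant $\epsilon>0$, and put $A(t):=\int_0^t a(s)\,ds$. Assume that there is a constant $\theta\ge 0$ such that \[ \mathbb E\Big[e^{\frac{q}{2}(2l-\theta)^+A(\tau)}\Big]<\infty, \] $\xi$ is $\mathcal F_\tau$-measurable with $\mathbb E\big[e^{\frac p2\theta A(\tau)}|\xi|^p\big]<\infty$, and $x$ is a càdlàg adapted process with \[ \mathbb E\bigg[\bigg(\int_0^\tau a(t)\,e^{\frac{\theta}{2}A(t)}|x(t)|\,dt\bigg)^p\bigg]<\infty . \] If, for every $t\ge 0$, \[ x(t)\le \mathbb E\Big[\xi+l\int_{t\wedge\tau}^{\tau}a(s)x(s)\,ds\,\Big|\,\mathcal F_t\Big]\quad \mathbb P\text{-a.s.}, \] then for every $t\ge0$, $\mathbb P$-a.s., \[ x(t)\le \mathbb E\Big[\xi\, e^{l\int_{t\wedge\tau}^{\tau}a(s)\,ds}\,\Big|\,\mathcal F_t\Big]. \]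
   Context: $(\Omega,\mathcal F,\mathbb P)$ is a complete probability space carrying a $d$-dimensional Brownian motion $B=(B_t)_{t\ge0}$, and $(\mathcal F_t)_{t\ge0}$ is the right-continuous completion (augmented by $\mathbb P$-null sets) of the natural filtration $\sigma\{B_s,s\le t\}$ of $B$. For $m\in\mathbb R$, $m^+:=\max\{m,0\}$, and $m\wedge n:=\min\{m,n\}$. *)

theory Defs
  imports "HOL-Probability.Probability"
begin

text \<open>A d-dimensional Brownian motion, given componentwise: B i t w is the i-th
  coordinate (i < d) of B at time t.  Natural filtration of B.\<close>

definition natural_sets :: "'w measure \<Rightarrow> nat \<Rightarrow> (nat \<Rightarrow> real \<Rightarrow> 'w \<Rightarrow> real) \<Rightarrow> real \<Rightarrow> 'w set set" where
  "natural_sets M d B t =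
     sigma_sets (space M)
       {(B i u) -` S \<inter> space M | i u S. i < d \<and> 0 \<le> u \<and> u \<le> t \<and> S \<in> sets borel}"

definition brownian_motion :: "'w measure \<Rightarrow> nat \<Rightarrow> (nat \<Rightarrow> real \<Rightarrow> 'w \<Rightarrow> real) \<Rightarrow> bool" where
  "brownian_motion M d B \<longleftrightarrow>
     prob_space M \<and>
     (\<forall>i<d. \<forall>t\<ge>0. B i t \<in> borel_measurable M) \<and>
     (\<forall>i<d. \<forall>w\<in>space M. B i 0 w = 0) \<and>
     (\<forall>i<d. \<forall>w\<in>space M. continuous_on {0..} (\<lambda>t. B i t w)) \<and>
     (\<forall>s t. 0 \<le> s \<longrightarrow> s < t \<longrightarrow>
        (\<forall>i<d. distributed M lborel (\<lambda>w. B i t w - B i s w) (normal_density 0 (sqrt (t - s)))) \<and>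
        prob_space.indep_sets M
          (\<lambda>j. case j of None \<Rightarrow> natural_sets M d B s
                      | Some i \<Rightarrow> sets (vimage_algebra (space M) (\<lambda>w. B i t w - B i s w) borel))
          (insert None (Some ` {..<d})))"

text \<open>The right-continuous completion of the natural filtration, augmented by the
  M-null sets: F_t = intersection over u > t of sigma(F^B_u and null sets).\<close>

definition bm_filtration :: "'w measure \<Rightarrow> nat \<Rightarrow> (nat \<Rightarrow> real \<Rightarrow> 'w \<Rightarrow> real) \<Rightarrow> real \<Rightarrow> 'w measure" where
  "bm_filtration M d B t =
     sigma (space M) (\<Inter>u\<in>{t<..}. sigma_sets (space M) (natural_sets M d B u \<union> null_sets M))"

definition progressive :: "(real \<Rightarrow> 'w measure) \<Rightarrow> (real \<Rightarrow> 'w \<Rightarrow> real) \<Rightarrow> bool" where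
  "progressive F X \<longleftrightarrow>
     (\<forall>t\<ge>0. (\<lambda>(s, w). X s w) \<in> borel_measurable (restrict_space borel {0..t} \<Otimes>\<^sub>M F t))"

definition adapted :: "(real \<Rightarrow> 'w measure) \<Rightarrow> (real \<Rightarrow> 'w \<Rightarrow> real) \<Rightarrow> bool" where
  "adapted F X \<longleftrightarrow> (\<forall>t\<ge>0. X t \<in> borel_measurable (F t))"

definition cadlag :: "'w set \<Rightarrow> (real \<Rightarrow> 'w \<Rightarrow> real) \<Rightarrow> bool" where
  "cadlag \<Omega> X \<longleftrightarrow>
     (\<forall>w\<in>\<Omega>. \<forall>t\<ge>0. continuous (at_right t) (\<lambda>s. X s w) \<and>
        (0 < t \<longrightarrow> (\<exists>L. ((\<lambda>s. X s w) \<longlongrightarrow> L) (at_left t))))"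

end

theory Submission
  imports Defs
begin

lemma glue_measurable:
  fixes f :: "real \<Rightarrow> 'w \<Rightarrow> real"
  assumes f: "(\<lambda>(s,w). f s w) \<in> borel_measurable (restrict_space borel {0..n} \<Otimes>\<^sub>M N)"
  shows "(\<lambda>(s,w). if s \<in> {0..n} then f s w else 0) \<in> borel_measurable (borel \<Otimes>\<^sub>M N)"
proof -
  let ?\<Omega> = "{0..n} \<times> space N"
  have id: "(\<lambda>x. x) \<in> measurable (restrict_space (borel \<Otimes>\<^sub>M N) ?\<Omega>) (restrict_space borel {0..n} \<Otimes>\<^sub>M N)"
  proof (subst measurable_pair_iff, intro conjI)
    show "fst \<circ> (\<lambda>x. x) \<in> measurable (restrict_space (borel \<Otimes>\<^sub>M N) ?\<Omega>) (restrict_space borel {0..n})"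
      by (rule measurable_restrict_space2) (auto intro!: measurable_restrict_space1 simp: space_restrict_space space_pair_measure)
    show "snd \<circ> (\<lambda>x. x) \<in> measurable (restrict_space (borel \<Otimes>\<^sub>M N) ?\<Omega>) N"
      by (auto intro!: measurable_restrict_space1)
  qed
  have "(\<lambda>(s,w). f s w) \<in> borel_measurable (restrict_space (borel \<Otimes>\<^sub>M N) ?\<Omega>)"
    using measurable_comp[OF id f] by (simp add: o_def)
  then have "(\<lambda>x. if x \<in> ?\<Omega> then (\<lambda>(s,w). f s w) x else 0) \<in> borel_measurable (borel \<Otimes>\<^sub>M N)"
    by (subst (asm) measurable_restrict_space_iff) (auto simp: space_pair_measure)
  then show ?thesis
    by (rule measurable_cong[THEN iffD1, rotated]) (auto simp: space_pair_measure split: if_splits)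
qed

lemma FTC_exp:
  fixes l c :: real assumes "0 \<le> c" "0 \<le> l"
  shows "(\<integral>\<^sup>+ v. ennreal (l * exp (l * v)) * indicator {0..c} v \<partial>lborel) = ennreal (exp (l * c) - 1)"
proof -
  have "((\<lambda>v. l * exp (l * v)) has_integral (exp (l * c) - exp (l * 0))) {0..c}"
    by (rule fundamental_theorem_of_calculus) (use assms in \<open>auto intro!: derivative_eq_intros simp: has_real_derivative_iff_has_vector_derivative[symmetric]\<close>)
  then show ?thesis
    by (subst nn_integral_has_integral_lebesgue'[where I="exp (l * c) - 1"]) (use assms in auto)
qed

lemma FTC_exp2:
  fixes l c :: real assumes "0 \<le> c" "0 \<le> l"
  shows "(\<integral>\<^sup>+ v. ennreal (l * l * exp (l * v) * (c - v)) * indicator {0..c} v \<partial>lborel) = ennreal (exp (l * c) - l * c - 1)"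
proof -
  have "((\<lambda>v. l * l * exp (l * v) * (c - v)) has_integral
      ((l * (c - c) * exp (l * c) + exp (l * c)) - (l * (c - 0) * exp (l * 0) + exp (l * 0)))) {0..c}"
    by (rule fundamental_theorem_of_calculus) (use assms in \<open>auto intro!: derivative_eq_intros simp: has_real_derivative_iff_has_vector_derivative[symmetric] algebra_simps\<close>)
  then have "((\<lambda>v. l * l * exp (l * v) * (c - v)) has_integral (exp (l * c) - l * c - 1)) {0..c}"
    by (simp add: algebra_simps)
  then show ?thesis
    by (subst nn_integral_has_integral_lebesgue'[where I="exp (l * c) - l * c - 1"]) (use assms in auto)
qed

lemma P1_aux:
  fixes f :: "real \<Rightarrow> real"
  assumes fi: "f integrable_on {t..r}" and f0: "\<And>u. u \<in> {t..r} \<Longrightarrow> 0 \<le> f u" and tr: "t \<le> r"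
    and fm: "f \<in> borel_measurable borel"
  defines "D \<equiv> \<lambda>s. integral {t..s} f"
  shows D_cont: "continuous_on {t..r} D"
    and D_add: "\<And>\<sigma> s. t \<le> \<sigma> \<Longrightarrow> \<sigma> \<le> s \<Longrightarrow> s \<le> r \<Longrightarrow> D s = D \<sigma> + integral {\<sigma>..s} f"
    and D_mono: "\<And>\<sigma> s. t \<le> \<sigma> \<Longrightarrow> \<sigma> \<le> s \<Longrightarrow> s \<le> r \<Longrightarrow> D \<sigma> \<le> D s"
    and D_t: "D t = 0"
    and D_nn: "\<And>s. t \<le> s \<Longrightarrow> s \<le> r \<Longrightarrow> 0 \<le> D s"
proof -
  show "continuous_on {t..r} D" unfolding D_def by (rule indefinite_integral_continuous_1[OF fi])
  show add: "D s = D \<sigma> + integral {\<sigma>..s} f" if "t \<le> \<sigma>" "\<sigma> \<le> s" "s \<le> r" for \<sigma> s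
  proof -
    have "f integrable_on {t..s}" using fi by (rule integrable_on_subinterval) (use that in auto)
    then show ?thesis unfolding D_def using Henstock_Kurzweil_Integration.integral_combine[where a=t and c=\<sigma> and b=s and f=f] that by auto
  qed
  have nn: "0 \<le> integral {\<sigma>..s} f" if "t \<le> \<sigma>" "\<sigma> \<le> s" "s \<le> r" for \<sigma> s
    by (rule integral_nonneg) (use that f0 in \<open>auto intro: integrable_on_subinterval[OF fi]\<close>)
  show "D \<sigma> \<le> D s" if "t \<le> \<sigma>" "\<sigma> \<le> s" "s \<le> r" for \<sigma> s
    using add[OF that] nn[OF that] by simp
  show "D t = 0" unfolding D_def by simp
  then show "0 \<le> D s" if "t \<le> s" "s \<le> r" for s
    using add[of t s] nn[of t s] that by simp
qed

lemma P1_level: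
  fixes f :: "real \<Rightarrow> real"
  assumes fi: "f integrable_on {t..r}" and f0: "\<And>u. u \<in> {t..r} \<Longrightarrow> 0 \<le> f u" and tr: "t \<le> r"
    and fm: "f \<in> borel_measurable borel" and v0: "0 \<le> v"
  shows "(\<integral>\<^sup>+ s. ennreal (f s) * indicator {t..r} s * indicator {s. v < integral {t..s} f} s \<partial>lborel)
     \<le> ennreal (integral {t..r} f - v)"
proof -
  define D where "D \<equiv> \<lambda>s. integral {t..s} f"
  note P = P1_aux[OF fi f0 tr fm, folded D_def]
  show ?thesis
  proof (cases "v < D r")
    case True
    obtain \<sigma> where \<sigma>: "\<sigma> \<in> {t..r}" "D \<sigma> = v"
      using IVT'[of D t v r] P(1) v0 True tr by (auto simp: D_def)
    have "(\<integral>\<^sup>+ s. ennreal (f s) * indicator {t..r} s * indicator {s. v < D s} s \<partial>lborel)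
        \<le> (\<integral>\<^sup>+ s. ennreal (f s) * indicator {\<sigma>..r} s \<partial>lborel)"
    proof (rule nn_integral_mono)
      fix s
      show "ennreal (f s) * indicator {t..r} s * indicator {s. v < D s} s \<le> ennreal (f s) * indicator {\<sigma>..r} s"
      proof (cases "s \<in> {t..r} \<and> v < D s")
        case True
        then have "\<sigma> \<le> s" using P(3)[of s \<sigma>] \<sigma> by (cases "\<sigma> \<le> s") (auto simp: D_def)
        then show ?thesis using True by (auto simp: indicator_def)
      qed (auto simp: indicator_def)
    qed
    also have "\<dots> = ennreal (integral {\<sigma>..r} f)"
      by (rule nn_integral_has_integral_lebesgue') (use f0 \<sigma> in \<open>auto intro!: integrable_integral integrable_on_subinterval[OF fi]\<close>)
    also have "integral {\<sigma>..r} f = D r - v" using P(2)[of \<sigma> r] \<sigma> by (auto simp: D_def)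
    finally show ?thesis unfolding D_def .
  next
    case False
    have z: "ennreal (f s) * indicator {t..r} s * indicator {s. v < D s} s = 0" for s
        using P(3)[of s r] False by (auto simp: indicator_def D_def)
    have "(\<integral>\<^sup>+ s. ennreal (f s) * indicator {t..r} s * indicator {s. v < D s} s \<partial>lborel) = 0"
      by (simp only: z nn_integral_0_iff) simp
    then show ?thesis unfolding D_def by simp
  qed
qed

lemma P1:
  fixes f :: "real \<Rightarrow> real"
  assumes fi: "f integrable_on {t..r}" and f0: "\<And>u. u \<in> {t..r} \<Longrightarrow> 0 \<le> f u" and tr: "t \<le> r"
    and fm: "f \<in> borel_measurable borel" and l0: "0 \<le> l"
  shows "(\<integral>\<^sup>+ s. ennreal (l * f s * exp (l * integral {t..s} f)) * indicator {t..r} s \<partial>lborel)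
     \<le> ennreal (exp (l * integral {t..r} f) - 1)"
proof -
  note fm[measurable]
  define D where "D \<equiv> \<lambda>s. integral {t..s} f"
  note P = P1_aux[OF fi f0 tr fm, folded D_def]
  have Dt: "D t = 0" by (simp add: D_def)
  have Dnn: "0 \<le> D s" if "s \<in> {t..r}" for s using that P(5) by (auto simp: D_def)
  have Dmono: "D s \<le> D r" if "s \<in> {t..r}" for s using that P(3)[of s r] by (auto simp: D_def)
  define D' where "D' \<equiv> \<lambda>s. indicator {t..r} s *\<^sub>R D s"
  have D'm[measurable]: "D' \<in> borel_measurable borel"
    unfolding D'_def by (rule borel_measurable_continuous_on_indicator) (use P(1) in \<open>auto simp: D_def\<close>)
  have D'eq: "s \<in> {t..r} \<Longrightarrow> D' s = D s" for s by (simp add: D'_def)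
  define E where "E \<equiv> \<lambda>s. \<integral>\<^sup>+ v. ennreal (l * exp (l * v)) * indicator {0..<D' s} v \<partial>lborel"
  have Em[measurable]: "E \<in> borel_measurable borel"
  proof -
    have "(\<lambda>(s, v). ennreal (l * exp (l * v)) * indicator {0..<D' s} v) \<in> borel_measurable (borel \<Otimes>\<^sub>M lborel)"
    proof -
      have *: "(\<lambda>(s, v). ennreal (l * exp (l * v)) * indicator {0..<D' s} v)
          = (\<lambda>p. ennreal (l * exp (l * snd p)) * indicator {p. 0 \<le> snd p \<and> snd p < D' (fst p)} p)"
        by (auto simp: indicator_def fun_eq_iff)
      show ?thesis unfolding * by measurable
    qed
    then show ?thesis unfolding E_def by measurable
  qed
  have Eeq: "ennreal (exp (l * D s)) = 1 + E s" if "s \<in> {t..r}" for s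
  proof -
    have "E s = (\<integral>\<^sup>+ v. ennreal (l * exp (l * v)) * indicator {0..D s} v \<partial>lborel)"
      unfolding E_def D'eq[OF that]
      by (rule nn_integral_cong_AE) (use AE_lborel_singleton[of "D s"] in \<open>auto simp: indicator_def\<close>)
    also have "\<dots> = ennreal (exp (l * D s) - 1)" by (rule FTC_exp) (use Dnn[OF that] l0 in auto)
    finally have Es: "E s = ennreal (exp (l * D s) - 1)" .
    have ge: "1 \<le> exp (l * D s)" using Dnn[OF that] l0 by simp
    have "ennreal (exp (l * D s)) = ennreal (1 + (exp (l * D s) - 1))" by simp
    also have "\<dots> = 1 + ennreal (exp (l * D s) - 1)" using ge by (subst ennreal_plus) auto
    finally show ?thesis using Es by simp
  qed
  have "(\<integral>\<^sup>+ s. ennreal (l * f s * exp (l * D s)) * indicator {t..r} s \<partial>lborel)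
      = (\<integral>\<^sup>+ s. ennreal (l * f s) * indicator {t..r} s + ennreal (l * f s) * indicator {t..r} s * E s \<partial>lborel)"
  proof (rule nn_integral_cong)
    fix s show "ennreal (l * f s * exp (l * D s)) * indicator {t..r} s
        = ennreal (l * f s) * indicator {t..r} s + ennreal (l * f s) * indicator {t..r} s * E s"
    proof (cases "s \<in> {t..r}")
      case True
      then have "ennreal (l * f s * exp (l * D s)) = ennreal (l * f s) * (1 + E s)"
        using Eeq[OF True] f0[OF True] l0 by (simp add: ennreal_mult)
      then show ?thesis using True by (simp add: distrib_left)
    qed simp
  qed
  also have "\<dots> = (\<integral>\<^sup>+ s. ennreal (l * f s) * indicator {t..r} s \<partial>lborel)
      + (\<integral>\<^sup>+ s. ennreal (l * f s) * indicator {t..r} s * E s \<partial>lborel)"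
    by (rule nn_integral_add) auto
  finally have eq1: "(\<integral>\<^sup>+ s. ennreal (l * f s * exp (l * D s)) * indicator {t..r} s \<partial>lborel)
      = (\<integral>\<^sup>+ s. ennreal (l * f s) * indicator {t..r} s \<partial>lborel)
      + (\<integral>\<^sup>+ s. ennreal (l * f s) * indicator {t..r} s * E s \<partial>lborel)" .
  have I1: "(\<integral>\<^sup>+ s. ennreal (l * f s) * indicator {t..r} s \<partial>lborel) = ennreal (l * D r)"
    unfolding D_def
    by (rule nn_integral_has_integral_lebesgue') (use f0 l0 fi in \<open>auto intro!: has_integral_mult_right integrable_integral\<close>)
  have "(\<integral>\<^sup>+ s. ennreal (l * f s) * indicator {t..r} s * E s \<partial>lborel)
      = (\<integral>\<^sup>+ s. \<integral>\<^sup>+ v. ennreal (l * f s) * indicator {t..r} s * (ennreal (l * exp (l * v)) * indicator {0..<D' s} v) \<partial>lborel \<partial>lborel)"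
    unfolding E_def by (rule nn_integral_cong) (rule nn_integral_cmult[symmetric], measurable)
  also have "\<dots> = (\<integral>\<^sup>+ v. \<integral>\<^sup>+ s. ennreal (l * f s) * indicator {t..r} s * (ennreal (l * exp (l * v)) * indicator {0..<D' s} v) \<partial>lborel \<partial>lborel)"
  proof (rule lborel_pair.Fubini'[symmetric])
    have *: "(\<lambda>(s, v). ennreal (l * f s) * indicator {t..r} s * (ennreal (l * exp (l * v)) * indicator {0..<D' s} v))
          = (\<lambda>p. ennreal (l * f (fst p)) * indicator {t..r} (fst p) * (ennreal (l * exp (l * snd p)) * indicator {p. 0 \<le> snd p \<and> snd p < D' (fst p)} p))"
        by (auto simp: indicator_def fun_eq_iff)
    show "(\<lambda>(s, v). ennreal (l * f s) * indicator {t..r} s * (ennreal (l * exp (l * v)) * indicator {0..<D' s} v)) \<in> borel_measurable (lborel \<Otimes>\<^sub>M lborel)"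
      unfolding * by measurable
  qed
  also have "\<dots> \<le> (\<integral>\<^sup>+ v. ennreal (l * l * exp (l * v) * (D r - v)) * indicator {0..D r} v \<partial>lborel)"
  proof (rule nn_integral_mono)
    fix v
    show "(\<integral>\<^sup>+ s. ennreal (l * f s) * indicator {t..r} s * (ennreal (l * exp (l * v)) * indicator {0..<D' s} v) \<partial>lborel)
        \<le> ennreal (l * l * exp (l * v) * (D r - v)) * indicator {0..D r} v"
    proof (cases "0 \<le> v")
      case False
      have z: "ennreal (l * f s) * indicator {t..r} s * (ennreal (l * exp (l * v)) * indicator {0..<D' s} v) = 0" for s
        using False by (simp add: indicator_def)
      show ?thesis by (simp only: z) simp
    next
      case True
      have "(\<integral>\<^sup>+ s. ennreal (l * f s) * indicator {t..r} s * (ennreal (l * exp (l * v)) * indicator {0..<D' s} v) \<partial>lborel)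
          = (\<integral>\<^sup>+ s. ennreal (l * l * exp (l * v)) * (ennreal (f s) * indicator {t..r} s * indicator {s. v < integral {t..s} f} s) \<partial>lborel)"
      proof (rule nn_integral_cong)
        fix s show "ennreal (l * f s) * indicator {t..r} s * (ennreal (l * exp (l * v)) * indicator {0..<D' s} v)
          = ennreal (l * l * exp (l * v)) * (ennreal (f s) * indicator {t..r} s * indicator {s. v < integral {t..s} f} s)"
        proof (cases "s \<in> {t..r}")
          case True': True
          have e: "ennreal (l * f s) * ennreal (l * exp (l * v)) = ennreal (l * l * exp (l * v)) * ennreal (f s)"
            using f0[OF True'] l0 by (simp add: ennreal_mult[symmetric] mult_ac)
          have "indicator {0..<D' s} v = (indicator {s. v < integral {t..s} f} s :: ennreal)"
            using True D'eq[OF True'] by (simp add: indicator_def D_def)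
          moreover have "indicator {t..r} s = (1::ennreal)" using True' by simp
          ultimately have "ennreal (l * f s) * indicator {t..r} s * (ennreal (l * exp (l * v)) * indicator {0..<D' s} v)
              = (ennreal (l * f s) * ennreal (l * exp (l * v))) * indicator {s. v < integral {t..s} f} s"
            by (simp only: mult_1_right mult.assoc)
          also have "\<dots> = ennreal (l * l * exp (l * v)) * (ennreal (f s) * indicator {t..r} s * indicator {s. v < integral {t..s} f} s)"
            unfolding e using True' by (simp only: indicator_simps mult_1_right mult.assoc)
          finally show ?thesis .
        qed simp
      qed
      also have "\<dots> = ennreal (l * l * exp (l * v)) * (\<integral>\<^sup>+ s. ennreal (f s) * indicator {t..r} s * indicator {s. v < integral {t..s} f} s \<partial>lborel)"
      proof (rule nn_integral_cmult)
        have *: "(\<lambda>s. ennreal (f s) * indicator {t..r} s * indicator {s. v < integral {t..s} f} s)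
            = (\<lambda>s. ennreal (f s) * indicator {t..r} s * indicator {s. v < D' s} s)"
          using D'eq by (auto simp: indicator_def fun_eq_iff D_def)
        show "(\<lambda>s. ennreal (f s) * indicator {t..r} s * indicator {s. v < integral {t..s} f} s) \<in> borel_measurable lborel"
          unfolding * by measurable
      qed
      also have "\<dots> \<le> ennreal (l * l * exp (l * v)) * ennreal (D r - v)"
        by (rule mult_left_mono) (use P1_level[OF fi f0 tr fm True] in \<open>auto simp: D_def\<close>)
      also have "\<dots> = ennreal (l * l * exp (l * v) * (D r - v)) * indicator {0..D r} v"
        using True by (cases "v \<le> D r") (auto simp: ennreal_mult[symmetric] ennreal_neg indicator_def)
      finally show ?thesis .
    qed
  qed
  also have "\<dots> = ennreal (exp (l * D r) - l * D r - 1)"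
    by (rule FTC_exp2) (use Dnn[of r] tr l0 in auto)
  finally have I2: "(\<integral>\<^sup>+ s. ennreal (l * f s) * indicator {t..r} s * E s \<partial>lborel)
      \<le> ennreal (exp (l * D r) - l * D r - 1)" .
  have "(\<integral>\<^sup>+ s. ennreal (l * f s * exp (l * D s)) * indicator {t..r} s \<partial>lborel)
     \<le> ennreal (l * D r) + ennreal (exp (l * D r) - l * D r - 1)" unfolding eq1 I1 by (rule add_left_mono[OF I2])
  also have "\<dots> = ennreal (exp (l * D r) - 1)"
  proof -
    have h1: "1 + l * D r \<le> exp (l * D r)" by (rule exp_ge_add_one_self)
    have h2: "0 \<le> l * D r" using Dnn[of r] tr l0 by auto
    show ?thesis by (subst ennreal_plus[symmetric]) (insert h1 h2, simp_all del: exp_ge_add_one_self)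
  qed
  finally show ?thesis unfolding D_def .
qed

lemma rce_le:
  assumes P: "prob_space M" and sub: "subalgebra M G"
    and h: "AE w in M. x0 w \<le> real_cond_exp M G g w"
    and x0: "\<And>w. w \<in> space M \<Longrightarrow> 0 \<le> x0 w"
    and g0: "\<And>w. w \<in> space M \<Longrightarrow> 0 \<le> g w"
    and psi[measurable]: "\<psi> \<in> borel_measurable G"
  shows "(\<integral>\<^sup>+ w. \<psi> w * ennreal (x0 w) \<partial>M) \<le> (\<integral>\<^sup>+ w. \<psi> w * ennreal (g w) \<partial>M)"
proof -
  interpret prob_space M by (rule P)
  interpret fs: finite_measure_subalgebra M G by standard (rule sub)
  let ?N = "nn_cond_exp M G (\<lambda>w. ennreal (g w))"
  let ?N' = "nn_cond_exp M G (\<lambda>w. ennreal (- g w))"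
  have rce: "real_cond_exp M G g w \<le> enn2real (?N w)" for w
    unfolding real_cond_exp_def by simp
  show ?thesis
  proof (cases "(\<lambda>w. ennreal (g w)) \<in> borel_measurable M")
    case True
    have "AE w in M. ennreal (x0 w) \<le> ?N w"
      using h
    proof eventually_elim
      case (elim w)
      then have "x0 w \<le> enn2real (?N w)" using rce[of w] by linarith
      then show ?case
        by (cases "?N w = \<top>") (auto simp: ennreal_enn2real_if intro: order_trans[OF ennreal_leI])
    qed
    then have "(\<integral>\<^sup>+ w. \<psi> w * ennreal (x0 w) \<partial>M) \<le> (\<integral>\<^sup>+ w. \<psi> w * ?N w \<partial>M)"
      by (intro nn_integral_mono_AE) (auto elim!: eventually_mono intro: mult_left_mono)
    also have "\<dots> = (\<integral>\<^sup>+ w. \<psi> w * ennreal (g w) \<partial>M)"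
      by (rule fs.nn_cond_exp_intg) (use True in auto)
    finally show ?thesis .
  next
    case False
    then have "?N = (\<lambda>_. 0)" by (simp add: nn_cond_exp_def)
    then have le0: "real_cond_exp M G g w \<le> 0" for w using rce[of w] by simp
    have "AE w in M. ennreal (x0 w) = 0"
      using h AE_space
    proof eventually_elim
      case (elim w) then show ?case using x0[of w] le0[of w] by simp
    qed
    then have "(\<integral>\<^sup>+ w. \<psi> w * ennreal (x0 w) \<partial>M) = (\<integral>\<^sup>+ w. 0 \<partial>M)"
      by (intro nn_integral_cong_AE) (auto elim!: eventually_mono)
    then show ?thesis by simp
  qed
qed

lemma rce_ge:
  assumes P: "prob_space M" and sub: "subalgebra M G"
    and x0m[measurable]: "x0 \<in> borel_measurable G"
    and Ym[measurable]: "Y \<in> borel_measurable M"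
    and Y0: "\<And>w. w \<in> space M \<Longrightarrow> 0 \<le> Y w"
    and Yfin: "(\<integral>\<^sup>+ w. ennreal (Y w) \<partial>M) < \<infinity>"
    and h: "\<And>B. B \<in> sets G \<Longrightarrow> (\<integral>\<^sup>+ w. indicator B w * ennreal (x0 w) \<partial>M) \<le> (\<integral>\<^sup>+ w. indicator B w * ennreal (Y w) \<partial>M)"
  shows "AE w in M. x0 w \<le> real_cond_exp M G Y w"
proof -
  interpret prob_space M by (rule P)
  interpret fs: finite_measure_subalgebra M G by standard (rule sub)
  define N where "N = nn_cond_exp M G (\<lambda>w. ennreal (Y w))"
  define N' where "N' = nn_cond_exp M G (\<lambda>w. ennreal (- Y w))"
  have NG[measurable]: "N \<in> borel_measurable G" unfolding N_def by simp
  have NM[measurable]: "N \<in> borel_measurable M" unfolding N_def by simp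
  have x0M[measurable]: "x0 \<in> borel_measurable M" by (rule measurable_from_subalg[OF sub x0m])
  have intN: "(\<integral>\<^sup>+ w. f w * N w \<partial>M) = (\<integral>\<^sup>+ w. f w * ennreal (Y w) \<partial>M)" if [measurable]: "f \<in> borel_measurable G" for f
    unfolding N_def by (rule fs.nn_cond_exp_intg) auto
  have Nfin: "(\<integral>\<^sup>+ w. N w \<partial>M) < \<infinity>" using intN[of "\<lambda>_. 1"] Yfin by simp
  have hN: "(\<integral>\<^sup>+ w. indicator B w * ennreal (x0 w) \<partial>M) \<le> (\<integral>\<^sup>+ w. indicator B w * N w \<partial>M)" if B: "B \<in> sets G" for B
    using h[OF B] intN[of "indicator B"] B by simp
  define S where "S = {w\<in>space M. N w < ennreal (x0 w)}"
  have SG: "S \<in> sets G"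
  proof -
    have "S = {w\<in>space G. N w < ennreal (x0 w)}" using sub by (simp add: S_def subalgebra_def)
    also have "\<dots> \<in> sets G" by measurable
    finally show ?thesis .
  qed
  have SM: "S \<in> sets M" using SG sub by (auto simp: subalgebra_def)
  have PNfin: "(\<integral>\<^sup>+ w. indicator S w * N w \<partial>M) \<noteq> \<infinity>"
  proof -
    have "(\<integral>\<^sup>+ w. indicator S w * N w \<partial>M) \<le> (\<integral>\<^sup>+ w. N w \<partial>M)"
      by (intro nn_integral_mono) (auto simp: indicator_def)
    then show ?thesis using Nfin by (auto simp: top_unique)
  qed
  have "(\<integral>\<^sup>+ w. indicator S w * ennreal (x0 w) - indicator S w * N w \<partial>M)
      = (\<integral>\<^sup>+ w. indicator S w * ennreal (x0 w) \<partial>M) - (\<integral>\<^sup>+ w. indicator S w * N w \<partial>M)"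
  proof (rule nn_integral_diff)
    show "AE w in M. indicator S w * N w \<le> indicator S w * ennreal (x0 w)"
      by (auto simp: S_def indicator_def)
  qed (use SM PNfin in auto)
  also have "\<dots> = 0" using hN[OF SG] PNfin by (intro diff_eq_0_ennreal) (auto simp: less_top order_le_less_trans)
  finally have "AE w in M. indicator S w * ennreal (x0 w) - indicator S w * N w = 0"
    by (subst (asm) nn_integral_0_iff_AE) (use SM in auto)
  then have AEle: "AE w in M. ennreal (x0 w) \<le> N w"
    using AE_space
  proof eventually_elim
    case (elim w) then show ?case by (cases "N w < ennreal (x0 w)") (auto simp: S_def diff_eq_0_iff_ennreal)
  qed
  have AEfin: "AE w in M. N w \<noteq> \<infinity>" by (rule nn_integral_PInf_AE) (use Nfin in auto)
  have "(\<integral>\<^sup>+ w. N' w \<partial>M) = (\<integral>\<^sup>+ w. 1 * ennreal (- Y w) \<partial>M)"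
    unfolding N'_def using fs.nn_cond_exp_intg[of "\<lambda>_. 1" "\<lambda>w. ennreal (- Y w)"] by simp
  also have "\<dots> = 0" using Y0 by (subst nn_integral_0_iff_AE) (auto simp: ennreal_neg)
  finally have "AE w in M. N' w = 0" by (subst (asm) nn_integral_0_iff_AE) (auto simp: N'_def)
  with AEle AEfin show ?thesis
  proof eventually_elim
    case (elim w)
    then have "x0 w \<le> enn2real (N w)"
    proof (cases "0 \<le> x0 w")
      case True
      have "enn2real (ennreal (x0 w)) \<le> enn2real (N w)"
        by (rule enn2real_mono) (use elim in \<open>auto simp: less_top\<close>)
      then show ?thesis using True by simp
    next
      case False then show ?thesis using enn2real_nonneg[of "N w"] by linarith
    qed
    then show ?case using elim by (simp add: real_cond_exp_def N_def[symmetric] N'_def[symmetric])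
  qed
qed

lemma measurable_pair_sub:
  assumes "sets N \<subseteq> sets M" "space N = space M" "h \<in> borel_measurable (K \<Otimes>\<^sub>M N)"
  shows "h \<in> borel_measurable (K \<Otimes>\<^sub>M M)"
proof -
  have idm: "(\<lambda>x. x) \<in> measurable M N"
    by (rule measurableI) (use assms(1,2) sets.sets_into_space in auto)
  have "(\<lambda>x. x) \<in> measurable (K \<Otimes>\<^sub>M M) (K \<Otimes>\<^sub>M N)"
  proof (subst measurable_pair_iff, intro conjI)
    show "snd \<circ> (\<lambda>x. x) \<in> measurable (K \<Otimes>\<^sub>M M) N"
      using measurable_comp[OF measurable_snd idm] by (simp add: o_def)
  qed (simp add: o_def)
  from measurable_comp[OF this assms(3)] show ?thesis by (simp add: o_def)
qed

locale gw =
  fixes M :: "'w measure" and F :: "real \<Rightarrow> 'w measure" and \<tau> \<xi> :: "'w \<Rightarrow> real"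
    and a x :: "real \<Rightarrow> 'w \<Rightarrow> real" and p q l \<theta> :: real
  assumes prob: "prob_space M"
    and F_space: "\<And>s. space (F s) = space M"
    and F_sets: "\<And>s. sets (F s) \<subseteq> sets M"
    and F_mono: "\<And>s s'. s \<le> s' \<Longrightarrow> sets (F s) \<subseteq> sets (F s')"
    and p_gt: "p > 1" and l_nonneg: "l \<ge> 0" and pq: "1 / p + 1 / q = 1"
    and tau_nonneg: "\<forall>w\<in>space M. 0 \<le> \<tau> w"
    and tau_stop: "stopping_time F \<tau>"
    and xi_nonneg: "\<forall>w\<in>space M. 0 \<le> \<xi> w"
    and a_nonneg: "\<forall>t\<ge>0. \<forall>w\<in>space M. 0 \<le> a t w" and a_prog: "progressive F a"
    and x_nonneg: "\<forall>t\<ge>0. \<forall>w\<in>space M. 0 \<le> x t w" and x_prog: "progressive F x"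
    and a_loc_int: "AE w in M. \<forall>t\<ge>0. set_integrable lborel {0..t} (\<lambda>s. a s w)"
    and theta_nonneg: "\<theta> \<ge> 0"
    and H1: "(\<integral>\<^sup>+ w. ennreal (exp (q / 2 * max (2 * l - \<theta>) 0 *
                 (LBINT s:{0..\<tau> w}. a s w))) \<partial>M) < \<infinity>"
    and xi_meas: "\<xi> \<in> borel_measurable (filtration.pre_sigma (space M) F \<tau>)"
    and H2: "(\<integral>\<^sup>+ w. ennreal (exp (p / 2 * \<theta> * (LBINT s:{0..\<tau> w}. a s w)) * \<bar>\<xi> w\<bar> powr p) \<partial>M) < \<infinity>"
    and x_adapted: "adapted F x"
    and H3_fin: "AE w in M. (\<integral>\<^sup>+ t\<in>{0..\<tau> w}.
                   ennreal (a t w * exp (\<theta> / 2 * (LBINT s:{0..t}. a s w)) * \<bar>x t w\<bar>) \<partial>lborel) < \<infinity>"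
    and H3: "(\<integral>\<^sup>+ w. ennreal ((enn2real (\<integral>\<^sup>+ t\<in>{0..\<tau> w}.
                   ennreal (a t w * exp (\<theta> / 2 * (LBINT s:{0..t}. a s w)) * \<bar>x t w\<bar>) \<partial>lborel)) powr p) \<partial>M) < \<infinity>"
    and hyp: "\<forall>t\<ge>0. AE w in M. x t w \<le>
               real_cond_exp M (F t) (\<lambda>w. \<xi> w + l * (LBINT s:{min t (\<tau> w)..\<tau> w}. a s w * x s w)) w"
begin

interpretation P: prob_space M by (rule prob)

lemma sub: "subalgebra M (F s)"
  unfolding subalgebra_def using F_sets F_space by auto

interpretation filt: filtration "space M" F
  by standard (auto simp: F_space F_mono)

lemma tau_meas[measurable]: "\<tau> \<in> borel_measurable M"
  by (rule measurable_stopping_time[OF tau_stop F_sets F_space])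

lemma pre_sigma_sub: "sets (filt.pre_sigma \<tau>) \<subseteq> sets M"
proof
  fix A assume A: "A \<in> sets (filt.pre_sigma \<tau>)"
  have sl: "{w\<in>A. \<tau> w \<le> real n} \<in> sets M" for n
    using filt.sets_pre_sigmaD[OF tau_stop A, of "real n"] F_sets by auto
  have "A = (\<Union>n. {w\<in>A. \<tau> w \<le> real n})"
    by (auto intro: real_arch_simple)
  also have "\<dots> \<in> sets M" using sl by auto
  finally show "A \<in> sets M" .
qed

lemma xi_M[measurable]: "\<xi> \<in> borel_measurable M"
proof -
  have "space (filt.pre_sigma \<tau>) = space M" by (rule filt.space_pre_sigma)
  then show ?thesis
    using xi_meas pre_sigma_sub by (auto simp: measurable_def)
qed

definition aa :: "real \<Rightarrow> 'w \<Rightarrow> real" where "aa s w = (if 0 \<le> s then a s w else 0)"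
definition xx :: "real \<Rightarrow> 'w \<Rightarrow> real" where "xx s w = (if 0 \<le> s then x s w else 0)"

lemma prog_joint:
  assumes pr: "progressive F f"
  shows "(\<lambda>p. if 0 \<le> fst p then f (fst p) (snd p) else 0) \<in> borel_measurable (borel \<Otimes>\<^sub>M M)"
proof (rule borel_measurable_LIMSEQ_real)
  let ?g = "\<lambda>n::nat. \<lambda>p. if fst p \<in> {0..real n} then f (fst p) (snd p) else 0"
  show "?g n \<in> borel_measurable (borel \<Otimes>\<^sub>M M)" for n
  proof -
    have "(\<lambda>(s,w). f s w) \<in> borel_measurable (restrict_space borel {0..real n} \<Otimes>\<^sub>M F (real n))"
      using pr unfolding progressive_def by auto
    from glue_measurable[OF this] have "(\<lambda>(s,w). if s \<in> {0..real n} then f s w else 0) \<in> borel_measurable (borel \<Otimes>\<^sub>M F (real n))" .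
    from measurable_pair_sub[OF F_sets F_space this] show ?thesis
      by (simp add: case_prod_beta')
  qed
  show "(\<lambda>n. ?g n p) \<longlonglongrightarrow> (if 0 \<le> fst p then f (fst p) (snd p) else 0)" for p
  proof (rule tendsto_eventually)
    obtain N :: nat where "fst p \<le> real N" using real_arch_simple by blast
    then show "\<forall>\<^sub>F n in sequentially. ?g n p = (if 0 \<le> fst p then f (fst p) (snd p) else 0)"
      by (auto simp: eventually_sequentially intro!: exI[of _ N])
  qed
qed

lemma aa_joint: "(\<lambda>p. aa (fst p) (snd p)) \<in> borel_measurable (borel \<Otimes>\<^sub>M M)"
  using prog_joint[OF a_prog] by (simp add: aa_def)

lemma xx_joint: "(\<lambda>p. xx (fst p) (snd p)) \<in> borel_measurable (borel \<Otimes>\<^sub>M M)"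
  using prog_joint[OF x_prog] by (simp add: xx_def)

lemma aa_meas[measurable (raw)]:
  assumes "f \<in> borel_measurable N" "g \<in> measurable N M"
  shows "(\<lambda>y. aa (f y) (g y)) \<in> borel_measurable N"
proof -
  have "(\<lambda>y. (f y, g y)) \<in> measurable N (borel \<Otimes>\<^sub>M M)" using assms by measurable
  from measurable_comp[OF this aa_joint] show ?thesis by (simp add: o_def)
qed

lemma xx_meas[measurable (raw)]:
  assumes "f \<in> borel_measurable N" "g \<in> measurable N M"
  shows "(\<lambda>y. xx (f y) (g y)) \<in> borel_measurable N"
proof -
  have "(\<lambda>y. (f y, g y)) \<in> measurable N (borel \<Otimes>\<^sub>M M)" using assms by measurable
  from measurable_comp[OF this xx_joint] show ?thesis by (simp add: o_def)
qed

lemma lbint_meas[measurable (raw)]: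
  assumes [measurable]: "\<alpha> \<in> borel_measurable N" "\<beta> \<in> borel_measurable N" "g \<in> measurable N M"
  shows "(\<lambda>y. LBINT u:{\<alpha> y..\<beta> y}. aa u (g y)) \<in> borel_measurable N"
proof -
  have *: "(\<lambda>y. LBINT u:{\<alpha> y..\<beta> y}. aa u (g y))
     = (\<lambda>y. \<integral> u. indicator {q. \<alpha> (fst q) \<le> snd q \<and> snd q \<le> \<beta> (fst q)} (y, u) * aa u (g y) \<partial>lborel)"
    by (auto simp: set_lebesgue_integral_def indicator_def fun_eq_iff)
  show ?thesis unfolding * by measurable
qed

lemma nnint_meas[measurable (raw)]:
  assumes [measurable]: "\<alpha> \<in> borel_measurable N" "\<beta> \<in> borel_measurable N" "g \<in> measurable N M"
  shows "(\<lambda>y. \<integral>\<^sup>+ u. ennreal (aa u (g y) * xx u (g y)) * indicator {\<alpha> y..\<beta> y} u \<partial>lborel) \<in> borel_measurable N"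
proof -
  have *: "(\<lambda>y. \<integral>\<^sup>+ u. ennreal (aa u (g y) * xx u (g y)) * indicator {\<alpha> y..\<beta> y} u \<partial>lborel)
     = (\<lambda>y. \<integral>\<^sup>+ u. ennreal (aa u (g y) * xx u (g y)) * indicator {q. \<alpha> (fst q) \<le> snd q \<and> snd q \<le> \<beta> (fst q)} (y, u) \<partial>lborel)"
    by (auto simp: indicator_def fun_eq_iff)
  show ?thesis unfolding * by measurable
qed

lemma a_Fs:
  assumes "0 \<le> s"
  shows "(\<lambda>w. a s w) \<in> borel_measurable (F s)"
proof -
  have "(\<lambda>(r,w). a r w) \<in> borel_measurable (restrict_space borel {0..s} \<Otimes>\<^sub>M F s)"
    using a_prog assms unfolding progressive_def by auto
  moreover have "(\<lambda>w. (s, w)) \<in> measurable (F s) (restrict_space borel {0..s} \<Otimes>\<^sub>M F s)"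
  proof (rule measurable_Pair)
    show "(\<lambda>w. s) \<in> measurable (F s) (restrict_space borel {0..s})"
      using assms by (intro measurable_const) (auto simp: space_restrict_space)
  qed simp
  ultimately have "(\<lambda>(r,w). a r w) \<circ> (\<lambda>w. (s, w)) \<in> borel_measurable (F s)"
    by (rule measurable_comp[rotated])
  then show ?thesis by (simp add: o_def)
qed

lemma W_Fs:
  assumes "0 \<le> t" "t \<le> s"
  shows "(\<lambda>w. LBINT u:{t..s}. aa u w) \<in> borel_measurable (F s)"
proof -
  define ga where "ga = (\<lambda>(u, w). if u \<in> {0..s} then a u w else 0)"
  have "(\<lambda>(r,w). a r w) \<in> borel_measurable (restrict_space borel {0..s} \<Otimes>\<^sub>M F s)"
    using a_prog assms unfolding progressive_def by auto
  from glue_measurable[OF this] have G: "ga \<in> borel_measurable (borel \<Otimes>\<^sub>M F s)"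
    unfolding ga_def .
  have sw: "(\<lambda>q. (snd q, fst q)) \<in> measurable (F s \<Otimes>\<^sub>M lborel) (borel \<Otimes>\<^sub>M F s)"
    by measurable
  have G2[measurable]: "(\<lambda>q. ga (snd q, fst q)) \<in> borel_measurable (F s \<Otimes>\<^sub>M lborel)"
    using measurable_comp[OF sw G] by (simp add: o_def)
  have *: "(\<lambda>w. LBINT u:{t..s}. aa u w) = (\<lambda>w. \<integral> u. indicator {t..s} u * ga (u, w) \<partial>lborel)"
    using assms by (auto simp: set_lebesgue_integral_def indicator_def fun_eq_iff aa_def ga_def intro!: Bochner_Integration.integral_cong)
  show ?thesis unfolding * by measurable
qed

end

lemma lbint_nonneg:
  fixes f :: "real \<Rightarrow> real"
  assumes "\<And>u. u \<in> S \<Longrightarrow> 0 \<le> f u"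
  shows "0 \<le> (LBINT u:S. f u)"
  unfolding set_lebesgue_integral_def
  by (rule integral_nonneg_AE) (use assms in \<open>auto simp: indicator_def\<close>)

lemma ennreal_lbint_le:
  fixes f :: "real \<Rightarrow> real"
  assumes "\<And>u. u \<in> S \<Longrightarrow> 0 \<le> f u"
  shows "ennreal (LBINT u:S. f u) \<le> (\<integral>\<^sup>+ u. ennreal (f u) * indicator S u \<partial>lborel)"
proof (cases "set_integrable lborel S f")
  case True
  have "ennreal (LBINT u:S. f u) = (\<integral>\<^sup>+ u. ennreal (indicator S u *\<^sub>R f u) \<partial>lborel)"
    unfolding set_lebesgue_integral_def
    by (rule nn_integral_eq_integral[symmetric]) (use True assms in \<open>auto simp: set_integrable_def indicator_def\<close>)
  also have "\<dots> = (\<integral>\<^sup>+ u. ennreal (f u) * indicator S u \<partial>lborel)"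
    by (rule nn_integral_cong) (auto simp: indicator_def)
  finally show ?thesis by simp
next
  case False
  then have "(LBINT u:S. f u) = 0"
    unfolding set_lebesgue_integral_def set_integrable_def by (rule not_integrable_integral_eq)
  then show ?thesis by simp
qed

lemma lbint_HK:
  fixes f :: "real \<Rightarrow> real"
  assumes "set_integrable lborel {0..\<gamma>} f" "0 \<le> \<alpha>" "\<beta> \<le> \<gamma>"
  shows "f integrable_on {\<alpha>..\<beta>}" "(LBINT u:{\<alpha>..\<beta>}. f u) = integral {\<alpha>..\<beta>} f"
proof -
  have "set_integrable lborel {\<alpha>..\<beta>} f"
    by (rule set_integrable_subset[OF assms(1)]) (use assms in auto)
  then show "f integrable_on {\<alpha>..\<beta>}" "(LBINT u:{\<alpha>..\<beta>}. f u) = integral {\<alpha>..\<beta>} f"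
    using set_borel_integral_eq_integral by auto
qed

lemma lbint_mono_set:
  fixes f :: "real \<Rightarrow> real"
  assumes si: "set_integrable lborel {0..\<gamma>} f" and f0: "\<And>u. u \<in> {0..\<gamma>} \<Longrightarrow> 0 \<le> f u"
    and "0 \<le> \<alpha>" "\<beta> \<le> \<gamma>"
  shows "(LBINT u:{\<alpha>..\<beta>}. f u) \<le> (LBINT u:{0..\<gamma>}. f u)"
proof (cases "\<alpha> \<le> \<beta>")
  case False
  then have "{\<alpha>..\<beta>} = {}" by auto
  then have "(LBINT u:{\<alpha>..\<beta>}. f u) = 0" by (simp add: set_lebesgue_integral_def)
  then show ?thesis using lbint_nonneg[of "{0..\<gamma>}" f] f0 by simp
next
  case True
  have g: "0 \<le> \<gamma>" using assms True by linarith
  note h1 = lbint_HK[OF si assms(3,4)]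
  note h2 = lbint_HK[OF si order_refl order_refl]
  have "integral {\<alpha>..\<beta>} f \<le> integral {0..\<gamma>} f"
    by (rule integral_subset_le) (use h1 h2 assms in auto)
  then show ?thesis using h1 h2 by simp
qed

context gw begin

interpretation P: prob_space M by (rule prob)

definition good :: "'w \<Rightarrow> bool" where
  "good w \<longleftrightarrow> w \<in> space M \<and> (\<forall>s\<ge>0. set_integrable lborel {0..s} (\<lambda>u. a u w)) \<and>
     (\<integral>\<^sup>+ t\<in>{0..\<tau> w}. ennreal (a t w * exp (\<theta> / 2 * (LBINT s:{0..t}. a s w)) * \<bar>x t w\<bar>) \<partial>lborel) < \<infinity>"

lemma AE_good: "AE w in M. good w"
  using a_loc_int H3_fin AE_space by eventually_elim (auto simp: good_def)

lemma aa_eq: "0 \<le> s \<Longrightarrow> aa s w = a s w" by (simp add: aa_def)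
lemma xx_eq: "0 \<le> s \<Longrightarrow> xx s w = x s w" by (simp add: xx_def)

lemma aa_nonneg: "w \<in> space M \<Longrightarrow> 0 \<le> aa s w" using a_nonneg by (simp add: aa_def)
lemma xx_nonneg: "w \<in> space M \<Longrightarrow> 0 \<le> xx s w" using x_nonneg by (simp add: xx_def)

lemma aa_sec[measurable]: "w \<in> space M \<Longrightarrow> (\<lambda>u. aa u w) \<in> borel_measurable borel"
  by measurable

lemma lbint_a_aa: "S \<subseteq> {0..} \<Longrightarrow> (LBINT u:S. a u w) = (LBINT u:S. aa u w)"
  unfolding set_lebesgue_integral_def
  by (rule Bochner_Integration.integral_cong) (auto simp: indicator_def aa_def)

lemma good_int: assumes "good w" "0 \<le> s" shows "set_integrable lborel {0..s} (\<lambda>u. aa u w)"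
proof -
  have i: "set_integrable lborel {0..s} (\<lambda>u. a u w)" using assms by (auto simp: good_def)
  have eq: "(\<lambda>u. indicator {0..s} u *\<^sub>R a u w) = (\<lambda>u. indicator {0..s} u *\<^sub>R aa u w)"
    by (auto simp: indicator_def aa_def fun_eq_iff)
  show ?thesis using i unfolding set_integrable_def eq .
qed

end

context gw begin

interpretation P: prob_space M by (rule prob)

context fixes t :: real assumes t0: "0 \<le> t" and lpos: "0 < l"
begin

definition W :: "real \<Rightarrow> 'w \<Rightarrow> real" where
  "W s w = exp (l * (LBINT u:{t..s}. aa u w))"
definition phi :: "real \<Rightarrow> 'w \<Rightarrow> ennreal" where
  "phi s w = ennreal (l * aa s w * W s w) * indicator {t..\<tau> w} s"
definition Ifun :: "real \<Rightarrow> 'w \<Rightarrow> ennreal" where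
  "Ifun s w = (\<integral>\<^sup>+ r. ennreal (aa r w * xx r w) * indicator {min s (\<tau> w)..\<tau> w} r \<partial>lborel)"
definition U :: "'w \<Rightarrow> ennreal" where
  "U w = (\<integral>\<^sup>+ r. ennreal (l * aa r w * xx r w * (W r w - 1)) * indicator {t..\<tau> w} r \<partial>lborel)"
definition V :: "'w \<Rightarrow> ennreal" where
  "V w = (\<integral>\<^sup>+ r. ennreal (l * aa r w * xx r w) * indicator {t..\<tau> w} r \<partial>lborel)"
definition E :: "'w \<Rightarrow> real" where
  "E w = exp (l * (LBINT s:{min t (\<tau> w)..\<tau> w}. a s w))"

lemma W_meas_s[measurable]: "w \<in> space M \<Longrightarrow> (\<lambda>s. W s w) \<in> borel_measurable borel"
  unfolding W_def by measurable

lemma W_ge1: "w \<in> space M \<Longrightarrow> 1 \<le> W s w"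
  unfolding W_def using lpos aa_nonneg by (auto intro!: mult_nonneg_nonneg lbint_nonneg)

lemma P1_w:
  assumes g: "good w" and tr: "t \<le> r"
  shows "(\<integral>\<^sup>+ s. ennreal (l * aa s w * W s w) * indicator {t..r} s \<partial>lborel) \<le> ennreal (W r w - 1)"
proof -
  have wM: "w \<in> space M" using g by (simp add: good_def)
  have si: "set_integrable lborel {0..r} (\<lambda>u. aa u w)" using good_int[OF g, of r] t0 tr by simp
  note H = lbint_HK[OF si t0]
  have fi: "(\<lambda>u. aa u w) integrable_on {t..r}" using H(1)[of r] by simp
  have "(\<integral>\<^sup>+ s. ennreal (l * aa s w * W s w) * indicator {t..r} s \<partial>lborel)
      = (\<integral>\<^sup>+ s. ennreal (l * aa s w * exp (l * integral {t..s} (\<lambda>u. aa u w))) * indicator {t..r} s \<partial>lborel)"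
  proof (rule nn_integral_cong)
    fix s show "ennreal (l * aa s w * W s w) * indicator {t..r} s
        = ennreal (l * aa s w * exp (l * integral {t..s} (\<lambda>u. aa u w))) * indicator {t..r} s"
      using H(2)[of s] by (cases "s \<in> {t..r}") (auto simp: W_def)
  qed
  also have "\<dots> \<le> ennreal (exp (l * integral {t..r} (\<lambda>u. aa u w)) - 1)"
    by (rule P1[OF fi _ tr]) (use aa_nonneg[OF wM] aa_sec[OF wM] lpos in auto)
  also have "exp (l * integral {t..r} (\<lambda>u. aa u w)) = W r w"
    using H(2)[of r] by (simp add: W_def)
  finally show ?thesis .
qed


lemma phi_meas_s[measurable]: "w \<in> space M \<Longrightarrow> (\<lambda>s. phi s w) \<in> borel_measurable borel"
  unfolding phi_def by measurable

lemma Ifun_meas_s[measurable]: "w \<in> space M \<Longrightarrow> (\<lambda>s. Ifun s w) \<in> borel_measurable borel"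
  unfolding Ifun_def by measurable

lemma stepB_w:
  assumes g: "good w"
  shows "(\<integral>\<^sup>+ s. phi s w * (ennreal (\<xi> w) + ennreal l * Ifun s w) \<partial>lborel) \<le> ennreal (\<xi> w) * ennreal (E w - 1) + U w"
proof (cases "t \<le> \<tau> w")
  case False
  then have "phi s w = 0" for s by (auto simp: phi_def)
  then show ?thesis by simp
next
  case True
  have wM[measurable]: "w \<in> space M" using g by (simp add: good_def)
  define T where "T = \<tau> w"
  have tT: "t \<le> T" using True by (simp add: T_def)
  have EW: "E w = W T w"
    unfolding E_def W_def T_def using True t0 lbint_a_aa[of "{t..\<tau> w}" w] by (simp add: min_def)
  have "(\<integral>\<^sup>+ s. phi s w * (ennreal (\<xi> w) + ennreal l * Ifun s w) \<partial>lborel)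
      = (\<integral>\<^sup>+ s. ennreal (\<xi> w) * phi s w + phi s w * (ennreal l * Ifun s w) \<partial>lborel)"
    by (simp add: distrib_left mult.commute)
  also have "\<dots> = (\<integral>\<^sup>+ s. ennreal (\<xi> w) * phi s w \<partial>lborel) + (\<integral>\<^sup>+ s. phi s w * (ennreal l * Ifun s w) \<partial>lborel)"
    by (rule nn_integral_add) auto
  finally have split: "(\<integral>\<^sup>+ s. phi s w * (ennreal (\<xi> w) + ennreal l * Ifun s w) \<partial>lborel)
      = (\<integral>\<^sup>+ s. ennreal (\<xi> w) * phi s w \<partial>lborel) + (\<integral>\<^sup>+ s. phi s w * (ennreal l * Ifun s w) \<partial>lborel)" .
  have first: "(\<integral>\<^sup>+ s. ennreal (\<xi> w) * phi s w \<partial>lborel) \<le> ennreal (\<xi> w) * ennreal (E w - 1)"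
  proof -
    have "(\<integral>\<^sup>+ s. ennreal (\<xi> w) * phi s w \<partial>lborel) = ennreal (\<xi> w) * (\<integral>\<^sup>+ s. phi s w \<partial>lborel)"
      by (rule nn_integral_cmult) auto
    also have "(\<integral>\<^sup>+ s. phi s w \<partial>lborel) \<le> ennreal (W T w - 1)"
      using P1_w[OF g tT] by (simp add: phi_def T_def)
    finally show ?thesis using EW by (simp add: mult_left_mono)
  qed
  define K where "K = (\<lambda>s r. ennreal (l * aa s w * W s w) * indicator {t..r} s * (ennreal (l * aa r w * xx r w) * indicator {t..T} r))"
  have Km: "(\<lambda>(s, r). K s r) \<in> borel_measurable (lborel \<Otimes>\<^sub>M lborel)"
  proof -
    have *: "(\<lambda>(s, r). K s r) = (\<lambda>p. ennreal (l * aa (fst p) w * W (fst p) w) * indicator {p. t \<le> fst p \<and> fst p \<le> snd p} p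
        * (ennreal (l * aa (snd p) w * xx (snd p) w) * indicator {t..T} (snd p)))"
      by (auto simp: K_def fun_eq_iff indicator_def)
    show ?thesis unfolding * by measurable
  qed
  have second: "(\<integral>\<^sup>+ s. phi s w * (ennreal l * Ifun s w) \<partial>lborel) \<le> U w"
  proof -
    have "(\<integral>\<^sup>+ s. phi s w * (ennreal l * Ifun s w) \<partial>lborel)
        = (\<integral>\<^sup>+ s. \<integral>\<^sup>+ r. phi s w * ennreal l * (ennreal (aa r w * xx r w) * indicator {min s (\<tau> w)..\<tau> w} r) \<partial>lborel \<partial>lborel)"
      unfolding Ifun_def by (rule nn_integral_cong) (simp add: nn_integral_cmult[symmetric] mult.assoc)
    also have "\<dots> = (\<integral>\<^sup>+ s. \<integral>\<^sup>+ r. K s r \<partial>lborel \<partial>lborel)"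
    proof (rule nn_integral_cong, rule nn_integral_cong)
      fix s r
      show "phi s w * ennreal l * (ennreal (aa r w * xx r w) * indicator {min s (\<tau> w)..\<tau> w} r) = K s r"
      proof (cases "t \<le> s \<and> s \<le> T")
        case True
        then have "min s (\<tau> w) = s" by (simp add: T_def)
        moreover have "ennreal l * ennreal (aa r w * xx r w) = ennreal (l * aa r w * xx r w)"
          using lpos by (simp add: ennreal_mult' mult.assoc)
        ultimately show ?thesis using True
          by (auto simp: phi_def K_def indicator_def T_def mult.assoc)
      next
        case False then show ?thesis by (auto simp: phi_def K_def indicator_def T_def)
      qed
    qed
    also have "\<dots> = (\<integral>\<^sup>+ r. \<integral>\<^sup>+ s. K s r \<partial>lborel \<partial>lborel)"
      using lborel_pair.Fubini'[OF Km] by simp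
    also have "\<dots> \<le> (\<integral>\<^sup>+ r. ennreal (l * aa r w * xx r w * (W r w - 1)) * indicator {t..T} r \<partial>lborel)"
    proof (rule nn_integral_mono)
      fix r
      show "(\<integral>\<^sup>+ s. K s r \<partial>lborel) \<le> ennreal (l * aa r w * xx r w * (W r w - 1)) * indicator {t..T} r"
      proof (cases "r \<in> {t..T}")
        case False
        then have "K s r = 0" for s by (simp add: K_def)
        then show ?thesis by simp
      next
        case True
        have "(\<integral>\<^sup>+ s. K s r \<partial>lborel) = (\<integral>\<^sup>+ s. ennreal (l * aa s w * W s w) * indicator {t..r} s \<partial>lborel) * ennreal (l * aa r w * xx r w)"
          unfolding K_def using True by (subst nn_integral_multc[symmetric]) auto
        also have "\<dots> \<le> ennreal (W r w - 1) * ennreal (l * aa r w * xx r w)"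
          by (rule mult_right_mono) (use P1_w[OF g, of r] True in auto)
        also have "\<dots> = ennreal (l * aa r w * xx r w * (W r w - 1)) * indicator {t..T} r"
          using True W_ge1[OF wM, of r] lpos aa_nonneg[OF wM, of r] xx_nonneg[OF wM, of r]
          by (simp add: ennreal_mult[symmetric] mult.commute)
        finally show ?thesis .
      qed
    qed
    also have "\<dots> = U w" by (simp add: U_def T_def)
    finally show ?thesis .
  qed
  show ?thesis unfolding split using first second by (rule add_mono)
qed


lemma LHS_UV:
  assumes wM[measurable]: "w \<in> space M"
  shows "(\<integral>\<^sup>+ s. phi s w * ennreal (xx s w) \<partial>lborel) = U w + V w"
proof -
  have "(\<integral>\<^sup>+ s. phi s w * ennreal (xx s w) \<partial>lborel)
      = (\<integral>\<^sup>+ s. ennreal (l * aa s w * xx s w * (W s w - 1)) * indicator {t..\<tau> w} s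
          + ennreal (l * aa s w * xx s w) * indicator {t..\<tau> w} s \<partial>lborel)"
  proof (rule nn_integral_cong)
    fix s
    have n1: "0 \<le> l * aa s w * xx s w * (W s w - 1)"
      using lpos aa_nonneg[OF wM, of s] xx_nonneg[OF wM, of s] W_ge1[OF wM, of s] by auto
    have n2: "0 \<le> l * aa s w * xx s w"
      using lpos aa_nonneg[OF wM, of s] xx_nonneg[OF wM, of s] by auto
    have "ennreal (l * aa s w * W s w) * ennreal (xx s w) = ennreal (l * aa s w * W s w * xx s w)"
      using lpos aa_nonneg[OF wM, of s] xx_nonneg[OF wM, of s] W_ge1[OF wM, of s]
      by (simp add: ennreal_mult)
    also have "l * aa s w * W s w * xx s w = l * aa s w * xx s w * (W s w - 1) + l * aa s w * xx s w"
      by (simp add: algebra_simps)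
    also have "ennreal \<dots> = ennreal (l * aa s w * xx s w * (W s w - 1)) + ennreal (l * aa s w * xx s w)"
      using n1 n2 by (rule ennreal_plus)
    finally show "phi s w * ennreal (xx s w) = ennreal (l * aa s w * xx s w * (W s w - 1)) * indicator {t..\<tau> w} s
          + ennreal (l * aa s w * xx s w) * indicator {t..\<tau> w} s"
      by (auto simp: phi_def indicator_def)
  qed
  also have "\<dots> = U w + V w" unfolding U_def V_def
    by (rule nn_integral_add) auto
  finally show ?thesis .
qed

definition cc :: real where "cc = max (l - \<theta> / 2) 0"
definition AT :: "'w \<Rightarrow> real" where "AT w = (LBINT s:{0..\<tau> w}. a s w)"
definition Jw :: "'w \<Rightarrow> ennreal" where
  "Jw w = (\<integral>\<^sup>+ s\<in>{0..\<tau> w}. ennreal (a s w * exp (\<theta> / 2 * (LBINT u:{0..s}. a u w)) * \<bar>x s w\<bar>) \<partial>lborel)"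

lemma dom_w:
  assumes g: "good w"
  shows "(\<integral>\<^sup>+ s. phi s w * ennreal (xx s w) \<partial>lborel) \<le> ennreal (l * exp (cc * AT w)) * Jw w"
proof -
  have wM[measurable]: "w \<in> space M" using g by (simp add: good_def)
  define T where "T = \<tau> w"
  have T0: "0 \<le> T" using tau_nonneg wM by (simp add: T_def)
  define A' where "A' = (\<lambda>s. LBINT u:{0..s}. aa u w)"
  have A'm[measurable]: "A' \<in> borel_measurable borel" unfolding A'_def by measurable
  have ATeq: "AT w = A' T" unfolding AT_def A'_def T_def by (rule lbint_a_aa) auto
  have Jeq: "Jw w = (\<integral>\<^sup>+ s. ennreal (aa s w * exp (\<theta> / 2 * A' s) * \<bar>xx s w\<bar>) * indicator {0..T} s \<partial>lborel)"
    unfolding Jw_def T_def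
  proof (rule nn_integral_cong)
    fix s show "ennreal (a s w * exp (\<theta> / 2 * (LBINT u:{0..s}. a u w)) * \<bar>x s w\<bar>) * indicator {0..\<tau> w} s
       = ennreal (aa s w * exp (\<theta> / 2 * A' s) * \<bar>xx s w\<bar>) * indicator {0..\<tau> w} s"
      using lbint_a_aa[of "{0..s}" w] by (cases "s \<in> {0..\<tau> w}") (auto simp: A'_def aa_def xx_def)
  qed
  have cc0: "0 \<le> cc" and cc1: "l - \<theta> / 2 \<le> cc" by (auto simp: cc_def)
  have pt: "phi s w * ennreal (xx s w) \<le> ennreal (l * exp (cc * AT w)) * (ennreal (aa s w * exp (\<theta> / 2 * A' s) * \<bar>xx s w\<bar>) * indicator {0..T} s)" for s
  proof (cases "s \<in> {t..T}")
    case False then show ?thesis by (simp add: phi_def T_def)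
  next
    case True
    have s0: "0 \<le> s" using True t0 by auto
    have si: "set_integrable lborel {0..s} (\<lambda>u. aa u w)" by (rule good_int[OF g s0])
    have siT: "set_integrable lborel {0..T} (\<lambda>u. aa u w)" by (rule good_int[OF g T0])
    have D_le: "(LBINT u:{t..s}. aa u w) \<le> A' s"
      unfolding A'_def by (rule lbint_mono_set[OF si]) (use aa_nonneg[OF wM] t0 in auto)
    have A_le: "A' s \<le> A' T"
      unfolding A'_def by (rule lbint_mono_set[OF siT]) (use aa_nonneg[OF wM] True in auto)
    have A0: "0 \<le> A' s" unfolding A'_def by (rule lbint_nonneg) (use aa_nonneg[OF wM] in auto)
    have "l * (LBINT u:{t..s}. aa u w) \<le> l * A' s" using D_le lpos by (simp add: mult_left_mono)
    also have "l * A' s = \<theta> / 2 * A' s + (l - \<theta> / 2) * A' s" by (simp add: algebra_simps)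
    also have "(l - \<theta> / 2) * A' s \<le> cc * A' s" using cc1 A0 by (rule mult_right_mono)
    also have "cc * A' s \<le> cc * A' T" using A_le cc0 by (rule mult_left_mono)
    finally have "l * (LBINT u:{t..s}. aa u w) \<le> \<theta> / 2 * A' s + cc * AT w" using ATeq by simp
    then have Wle: "W s w \<le> exp (\<theta> / 2 * A' s) * exp (cc * AT w)"
      unfolding W_def by (simp add: exp_add[symmetric])
    have "l * aa s w * W s w * xx s w \<le> l * aa s w * (exp (\<theta> / 2 * A' s) * exp (cc * AT w)) * xx s w"
      using Wle lpos aa_nonneg[OF wM, of s] xx_nonneg[OF wM, of s]
      by (intro mult_right_mono mult_left_mono) auto
    also have "\<dots> = (l * exp (cc * AT w)) * (aa s w * exp (\<theta> / 2 * A' s) * \<bar>xx s w\<bar>)"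
      using xx_nonneg[OF wM, of s] by (simp add: algebra_simps)
    finally have le: "l * aa s w * W s w * xx s w \<le> (l * exp (cc * AT w)) * (aa s w * exp (\<theta> / 2 * A' s) * \<bar>xx s w\<bar>)" .
    have "phi s w * ennreal (xx s w) = ennreal (l * aa s w * W s w * xx s w)"
      using True lpos aa_nonneg[OF wM, of s] xx_nonneg[OF wM, of s] W_ge1[OF wM, of s]
      by (simp add: phi_def T_def ennreal_mult)
    also have "\<dots> \<le> ennreal ((l * exp (cc * AT w)) * (aa s w * exp (\<theta> / 2 * A' s) * \<bar>xx s w\<bar>))"
      using le by (rule ennreal_leI)
    also have "\<dots> = ennreal (l * exp (cc * AT w)) * (ennreal (aa s w * exp (\<theta> / 2 * A' s) * \<bar>xx s w\<bar>) * indicator {0..T} s)"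
      using True t0 lpos by (subst ennreal_mult') (auto simp: indicator_def)
    finally show ?thesis .
  qed
  have "(\<integral>\<^sup>+ s. phi s w * ennreal (xx s w) \<partial>lborel)
      \<le> (\<integral>\<^sup>+ s. ennreal (l * exp (cc * AT w)) * (ennreal (aa s w * exp (\<theta> / 2 * A' s) * \<bar>xx s w\<bar>) * indicator {0..T} s) \<partial>lborel)"
    by (rule nn_integral_mono) (rule pt)
  also have "\<dots> = ennreal (l * exp (cc * AT w)) * Jw w"
    unfolding Jeq by (rule nn_integral_cmult) measurable
  finally show ?thesis .
qed

end
end

context gw begin

interpretation P: prob_space M by (rule prob)

interpretation pf: pair_sigma_finite lborel M
  by (intro pair_sigma_finite.intro lborel.sigma_finite_measure_axioms P.sigma_finite_measure_axioms)

context fixes t :: real assumes t0: "0 \<le> t" and lpos: "0 < l"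
begin

lemmas W_d7 = W_def[OF t0 lpos] and phi_d7 = phi_def[OF t0 lpos] and Ifun_d7 = Ifun_def[OF t0 lpos]
  and U_d7 = U_def[OF t0 lpos] and V_d7 = V_def[OF t0 lpos] and E_d7 = E_def[OF t0 lpos]
  and cc_d7 = cc_def[OF t0 lpos] and AT_d7 = AT_def[OF t0 lpos] and Jw_d7 = Jw_def[OF t0 lpos]

lemma W_joint[measurable]: "(\<lambda>p. W t (fst p) (snd p)) \<in> borel_measurable (lborel \<Otimes>\<^sub>M M)"
  unfolding W_d7 by measurable

lemma phi_joint: "(\<lambda>p. phi t (fst p) (snd p)) \<in> borel_measurable (lborel \<Otimes>\<^sub>M M)"
proof -
  have *: "(\<lambda>p. phi t (fst p) (snd p)) = (\<lambda>p. ennreal (l * aa (fst p) (snd p) * W t (fst p) (snd p)) *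
      indicator {p. t \<le> fst p \<and> fst p \<le> \<tau> (snd p)} p)"
    by (auto simp: phi_d7 indicator_def fun_eq_iff)
  show ?thesis unfolding * by measurable
qed

lemma Ifun_joint: "(\<lambda>p. Ifun (fst p) (snd p)) \<in> borel_measurable (lborel \<Otimes>\<^sub>M M)"
  unfolding Ifun_d7 by measurable

lemma U_meas: "U t \<in> borel_measurable M"
proof -
  have *: "U t = (\<lambda>w. \<integral>\<^sup>+ r. ennreal (l * aa r w * xx r w * (W t r w - 1)) * indicator {p. t \<le> snd p \<and> snd p \<le> \<tau> (fst p)} (w, r) \<partial>lborel)"
    by (auto simp: U_d7 indicator_def fun_eq_iff)
  have [measurable]: "(\<lambda>p. W t (snd p) (fst p)) \<in> borel_measurable (M \<Otimes>\<^sub>M lborel)"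
    unfolding W_d7 by measurable
  show ?thesis unfolding * by measurable
qed

lemma V_meas: "V t \<in> borel_measurable M"
proof -
  have *: "V t = (\<lambda>w. \<integral>\<^sup>+ r. ennreal (l * aa r w * xx r w) * indicator {p. t \<le> snd p \<and> snd p \<le> \<tau> (fst p)} (w, r) \<partial>lborel)"
    by (auto simp: V_d7 indicator_def fun_eq_iff)
  show ?thesis unfolding * by measurable
qed

lemma E_meas: "E t \<in> borel_measurable M"
proof -
  have m: "(\<lambda>w. exp (l * (LBINT s:{min t (\<tau> w)..\<tau> w}. aa s w))) \<in> borel_measurable M" by measurable
  have eq: "w \<in> space M \<Longrightarrow> E t w = exp (l * (LBINT s:{min t (\<tau> w)..\<tau> w}. aa s w))" for w
    unfolding E_d7 using t0 tau_nonneg lbint_a_aa[of "{min t (\<tau> w)..\<tau> w}" w] by auto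
  show ?thesis by (rule measurable_cong[THEN iffD2, OF _ m]) (rule eq)
qed

lemma AT_meas: "AT \<in> borel_measurable M"
proof -
  have "AT = (\<lambda>w. (LBINT s:{0..\<tau> w}. aa s w))"
    unfolding AT_d7 by (intro ext lbint_a_aa) auto
  then show ?thesis by simp
qed

lemma Jw_meas: "Jw \<in> borel_measurable M"
proof -
  have "Jw = (\<lambda>w. \<integral>\<^sup>+ s. ennreal (aa s w * exp (\<theta> / 2 * (LBINT u:{0..s}. aa u w)) * \<bar>xx s w\<bar>) * indicator {p. 0 \<le> snd p \<and> snd p \<le> \<tau> (fst p)} (w, s) \<partial>lborel)"
  proof (intro ext)
    fix w show "Jw w = (\<integral>\<^sup>+ s. ennreal (aa s w * exp (\<theta> / 2 * (LBINT u:{0..s}. aa u w)) * \<bar>xx s w\<bar>) * indicator {p. 0 \<le> snd p \<and> snd p \<le> \<tau> (fst p)} (w, s) \<partial>lborel)"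
      unfolding Jw_d7
    proof (rule nn_integral_cong)
      fix s show "ennreal (a s w * exp (\<theta> / 2 * (LBINT u:{0..s}. a u w)) * \<bar>x s w\<bar>) * indicator {0..\<tau> w} s =
         ennreal (aa s w * exp (\<theta> / 2 * (LBINT u:{0..s}. aa u w)) * \<bar>xx s w\<bar>) * indicator {p. 0 \<le> snd p \<and> snd p \<le> \<tau> (fst p)} (w, s)"
        using lbint_a_aa[of "{0..s}" w] by (cases "s \<in> {0..\<tau> w}") (auto simp: aa_def xx_def indicator_def)
    qed
  qed
  also have "\<dots> \<in> borel_measurable M" by measurable
  finally show ?thesis .
qed

end
end

context gw begin

interpretation P: prob_space M by (rule prob)

interpretation pf: pair_sigma_finite lborel M
  by (intro pair_sigma_finite.intro lborel.sigma_finite_measure_axioms P.sigma_finite_measure_axioms)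

lemma g_nonneg:
  assumes "0 \<le> s" "w \<in> space M"
  shows "0 \<le> \<xi> w + l * (LBINT r:{min s (\<tau> w)..\<tau> w}. a r w * x r w)"
proof -
  have "0 \<le> (LBINT r:{min s (\<tau> w)..\<tau> w}. a r w * x r w)"
    by (rule lbint_nonneg) (use assms a_nonneg x_nonneg tau_nonneg in auto)
  then show ?thesis using xi_nonneg assms l_nonneg by auto
qed

lemma g_bound:
  assumes s0: "0 \<le> s" and wM: "w \<in> space M"
  shows "ennreal (\<xi> w + l * (LBINT r:{min s (\<tau> w)..\<tau> w}. a r w * x r w))
     \<le> ennreal (\<xi> w) + ennreal l * (\<integral>\<^sup>+ r. ennreal (aa r w * xx r w) * indicator {min s (\<tau> w)..\<tau> w} r \<partial>lborel)"
proof -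
  let ?S = "{min s (\<tau> w)..\<tau> w}"
  have S0: "r \<in> ?S \<Longrightarrow> 0 \<le> r" for r using s0 tau_nonneg wM by auto
  have L0: "0 \<le> (LBINT r:?S. a r w * x r w)"
    by (rule lbint_nonneg) (use S0 a_nonneg x_nonneg wM in auto)
  have "ennreal (\<xi> w + l * (LBINT r:?S. a r w * x r w)) = ennreal (\<xi> w) + ennreal l * ennreal (LBINT r:?S. a r w * x r w)"
    using L0 xi_nonneg wM l_nonneg by (simp add: ennreal_plus ennreal_mult)
  also have "ennreal (LBINT r:?S. a r w * x r w) \<le> (\<integral>\<^sup>+ r. ennreal (a r w * x r w) * indicator ?S r \<partial>lborel)"
    by (rule ennreal_lbint_le) (use S0 a_nonneg x_nonneg wM in auto)
  also have "\<dots> = (\<integral>\<^sup>+ r. ennreal (aa r w * xx r w) * indicator ?S r \<partial>lborel)"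
    by (rule nn_integral_cong) (use S0 in \<open>auto simp: aa_def xx_def indicator_def\<close>)
  finally show ?thesis by (simp add: add_left_mono mult_left_mono)
qed

interpretation filt: filtration "space M" F
  by standard (auto simp: F_space F_mono)

context fixes t :: real assumes t0: "0 \<le> t" and lpos: "0 < l"
begin

lemmas W_d8 = W_def[OF t0 lpos] and phi_d8 = phi_def[OF t0 lpos] and Ifun_d8 = Ifun_def[OF t0 lpos]
  and U_d8 = U_def[OF t0 lpos] and V_d8 = V_def[OF t0 lpos] and E_d8 = E_def[OF t0 lpos]
  and cc_d8 = cc_def[OF t0 lpos] and AT_d8 = AT_def[OF t0 lpos] and Jw_d8 = Jw_def[OF t0 lpos]

lemma psi_Fs:
  assumes B: "B \<in> sets (F t)" and ts: "t \<le> s"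
  shows "(\<lambda>w. indicator B w * phi t s w) \<in> borel_measurable (F s)"
proof -
  have s0: "0 \<le> s" using t0 ts by simp
  have [measurable]: "B \<in> sets (F s)" using F_mono[OF ts] B by auto
  have [measurable]: "(\<lambda>w. a s w) \<in> borel_measurable (F s)" by (rule a_Fs[OF s0])
  have [measurable]: "(\<lambda>w. LBINT u:{t..s}. aa u w) \<in> borel_measurable (F s)" by (rule W_Fs[OF t0 ts])
  have [measurable]: "Measurable.pred (F s) (\<lambda>w. \<tau> w < s)"
    by (rule filt.stopping_time_less_const[OF tau_stop])
  have m: "(\<lambda>w. indicator B w * (ennreal (l * a s w * exp (l * (LBINT u:{t..s}. aa u w))) * indicator {w. \<not> \<tau> w < s} w))
      \<in> borel_measurable (F s)" by measurable
  show ?thesis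
    by (rule measurable_cong[THEN iffD2, OF _ m]) (use ts s0 in \<open>auto simp: phi_d8 W_d8 aa_def indicator_def\<close>)
qed

lemma IfunV:
  assumes wM: "w \<in> space M"
  shows "ennreal l * Ifun t w = V t w"
proof (cases "t \<le> \<tau> w")
  case True
  then have "ennreal l * Ifun t w = (\<integral>\<^sup>+ r. ennreal l * (ennreal (aa r w * xx r w) * indicator {t..\<tau> w} r) \<partial>lborel)"
    unfolding Ifun_d8 using wM by (subst nn_integral_cmult) (auto simp: min_def)
  also have "\<dots> = V t w" unfolding V_d8 using lpos
    by (intro nn_integral_cong) (simp add: ennreal_mult' mult.assoc)
  finally show ?thesis .
next
  case False
  have "{min t (\<tau> w)..\<tau> w} = {\<tau> w}" using False by auto
  then have "Ifun t w = (\<integral>\<^sup>+ r. ennreal (aa r w * xx r w) * indicator {\<tau> w} r \<partial>lborel)" unfolding Ifun_d8 by simp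
  also have "\<dots> = 0" by (simp add: nn_integral_indicator_singleton)
  finally have "Ifun t w = 0" .
  moreover have "V t w = 0"
  proof -
    have z: "ennreal (l * aa r w * xx r w) * indicator {t..\<tau> w} r = 0" for r
      using False by (auto simp: indicator_def)
    show ?thesis unfolding V_d8 by (simp only: z) simp
  qed
  ultimately show ?thesis by simp
qed

lemma stepC:
  assumes B: "B \<in> sets (F t)"
  shows "(\<integral>\<^sup>+ w. indicator B w * ennreal (x t w) \<partial>M) \<le> (\<integral>\<^sup>+ w. indicator B w * (ennreal (\<xi> w) + V t w) \<partial>M)"
proof -
  have "(\<integral>\<^sup>+ w. indicator B w * ennreal (x t w) \<partial>M)
      \<le> (\<integral>\<^sup>+ w. indicator B w * ennreal (\<xi> w + l * (LBINT s:{min t (\<tau> w)..\<tau> w}. a s w * x s w)) \<partial>M)"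
    by (rule rce_le[OF prob sub]) (use hyp t0 x_nonneg g_nonneg B in auto)
  also have "\<dots> \<le> (\<integral>\<^sup>+ w. indicator B w * (ennreal (\<xi> w) + V t w) \<partial>M)"
  proof (rule nn_integral_mono)
    fix w assume wM: "w \<in> space M"
    show "indicator B w * ennreal (\<xi> w + l * (LBINT s:{min t (\<tau> w)..\<tau> w}. a s w * x s w))
        \<le> indicator B w * (ennreal (\<xi> w) + V t w)"
      using g_bound[OF t0 wM] IfunV[OF wM] unfolding Ifun_d8 by (intro mult_left_mono) auto
  qed
  finally show ?thesis .
qed


lemma stepA_int:
  assumes B: "B \<in> sets (F t)"
  shows "(\<integral>\<^sup>+ w. indicator B w * (\<integral>\<^sup>+ s. phi t s w * ennreal (xx s w) \<partial>lborel) \<partial>M)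
    \<le> (\<integral>\<^sup>+ w. indicator B w * (\<integral>\<^sup>+ s. phi t s w * (ennreal (\<xi> w) + ennreal l * Ifun s w) \<partial>lborel) \<partial>M)"
proof -
  have BM[measurable]: "B \<in> sets M" using B F_sets by auto
  note [measurable] = phi_joint[OF t0 lpos] Ifun_joint[OF t0 lpos]
  have ms1: "w \<in> space M \<Longrightarrow> (\<lambda>s. phi t s w * ennreal (xx s w)) \<in> borel_measurable lborel" for w
    using phi_meas_s[OF t0 lpos, of w] by measurable
  have ms2: "w \<in> space M \<Longrightarrow> (\<lambda>s. phi t s w * (ennreal (\<xi> w) + ennreal l * Ifun s w)) \<in> borel_measurable lborel" for w
    using phi_meas_s[OF t0 lpos, of w] Ifun_meas_s[OF t0 lpos, of w] by measurable
  have L: "(\<integral>\<^sup>+ w. indicator B w * (\<integral>\<^sup>+ s. phi t s w * ennreal (xx s w) \<partial>lborel) \<partial>M)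
      = (\<integral>\<^sup>+ s. \<integral>\<^sup>+ w. indicator B w * (phi t s w * ennreal (xx s w)) \<partial>M \<partial>lborel)"
  proof -
    have "(\<integral>\<^sup>+ w. indicator B w * (\<integral>\<^sup>+ s. phi t s w * ennreal (xx s w) \<partial>lborel) \<partial>M)
        = (\<integral>\<^sup>+ w. \<integral>\<^sup>+ s. indicator B w * (phi t s w * ennreal (xx s w)) \<partial>lborel \<partial>M)"
      by (rule nn_integral_cong) (rule nn_integral_cmult[symmetric, OF ms1])
    also have "\<dots> = (\<integral>\<^sup>+ s. \<integral>\<^sup>+ w. indicator B w * (phi t s w * ennreal (xx s w)) \<partial>M \<partial>lborel)"
    proof (rule pf.Fubini')
      have *: "(\<lambda>(s, w). indicator B w * (phi t s w * ennreal (xx s w))) =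
          (\<lambda>p. indicator B (snd p) * (phi t (fst p) (snd p) * ennreal (xx (fst p) (snd p))))"
        by auto
      show "(\<lambda>(s, w). indicator B w * (phi t s w * ennreal (xx s w))) \<in> borel_measurable (lborel \<Otimes>\<^sub>M M)"
        unfolding * by measurable
    qed
    finally show ?thesis .
  qed
  have R: "(\<integral>\<^sup>+ w. indicator B w * (\<integral>\<^sup>+ s. phi t s w * (ennreal (\<xi> w) + ennreal l * Ifun s w) \<partial>lborel) \<partial>M)
      = (\<integral>\<^sup>+ s. \<integral>\<^sup>+ w. indicator B w * (phi t s w * (ennreal (\<xi> w) + ennreal l * Ifun s w)) \<partial>M \<partial>lborel)"
  proof -
    have "(\<integral>\<^sup>+ w. indicator B w * (\<integral>\<^sup>+ s. phi t s w * (ennreal (\<xi> w) + ennreal l * Ifun s w) \<partial>lborel) \<partial>M)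
        = (\<integral>\<^sup>+ w. \<integral>\<^sup>+ s. indicator B w * (phi t s w * (ennreal (\<xi> w) + ennreal l * Ifun s w)) \<partial>lborel \<partial>M)"
      by (rule nn_integral_cong) (rule nn_integral_cmult[symmetric, OF ms2])
    also have "\<dots> = (\<integral>\<^sup>+ s. \<integral>\<^sup>+ w. indicator B w * (phi t s w * (ennreal (\<xi> w) + ennreal l * Ifun s w)) \<partial>M \<partial>lborel)"
    proof (rule pf.Fubini')
      have *: "(\<lambda>(s, w). indicator B w * (phi t s w * (ennreal (\<xi> w) + ennreal l * Ifun s w))) =
          (\<lambda>p. indicator B (snd p) * (phi t (fst p) (snd p) * (ennreal (\<xi> (snd p)) + ennreal l * Ifun (fst p) (snd p))))"
        by auto
      show "(\<lambda>(s, w). indicator B w * (phi t s w * (ennreal (\<xi> w) + ennreal l * Ifun s w))) \<in> borel_measurable (lborel \<Otimes>\<^sub>M M)"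
        unfolding * by measurable
    qed
    finally show ?thesis .
  qed
  have mono: "(\<integral>\<^sup>+ w. indicator B w * (phi t s w * ennreal (xx s w)) \<partial>M)
      \<le> (\<integral>\<^sup>+ w. indicator B w * (phi t s w * (ennreal (\<xi> w) + ennreal l * Ifun s w)) \<partial>M)" for s
  proof (cases "t \<le> s")
    case False
    then have "phi t s w = 0" for w by (simp add: phi_d8)
    then show ?thesis by simp
  next
    case True
    have s0: "0 \<le> s" using t0 True by simp
    have "(\<integral>\<^sup>+ w. indicator B w * (phi t s w * ennreal (xx s w)) \<partial>M)
        = (\<integral>\<^sup>+ w. (indicator B w * phi t s w) * ennreal (x s w) \<partial>M)"
      using s0 by (simp add: xx_def mult.assoc)
    also have "\<dots> \<le> (\<integral>\<^sup>+ w. (indicator B w * phi t s w) * ennreal (\<xi> w + l * (LBINT r:{min s (\<tau> w)..\<tau> w}. a r w * x r w)) \<partial>M)"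
      by (rule rce_le[OF prob sub]) (use hyp s0 x_nonneg g_nonneg psi_Fs[OF B True] in auto)
    also have "\<dots> \<le> (\<integral>\<^sup>+ w. indicator B w * (phi t s w * (ennreal (\<xi> w) + ennreal l * Ifun s w)) \<partial>M)"
    proof (rule nn_integral_mono)
      fix w assume wM: "w \<in> space M"
      show "indicator B w * phi t s w * ennreal (\<xi> w + l * (LBINT r:{min s (\<tau> w)..\<tau> w}. a r w * x r w))
          \<le> indicator B w * (phi t s w * (ennreal (\<xi> w) + ennreal l * Ifun s w))"
        using g_bound[OF s0 wM] unfolding Ifun_d8 mult.assoc by (intro mult_left_mono) auto
    qed
    finally show ?thesis .
  qed
  show ?thesis unfolding L R by (rule nn_integral_mono) (rule mono)
qed

end
end

context gw begin

interpretation P: prob_space M by (rule prob)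

lemma q_gt: "q > 1"
proof -
  have "1 / q = 1 - 1 / p" using pq by simp
  moreover have "0 < 1 - 1 / p" "1 - 1 / p < 1" using p_gt by auto
  ultimately have "0 < 1 / q" "1 / q < 1" by auto
  then show ?thesis by (simp add: divide_less_eq_1 split: if_splits)
qed

context fixes t :: real assumes t0: "0 \<le> t" and lpos: "0 < l"
begin

lemmas W_d9 = W_def[OF t0 lpos] and phi_d9 = phi_def[OF t0 lpos] and Ifun_d9 = Ifun_def[OF t0 lpos]
  and U_d9 = U_def[OF t0 lpos] and V_d9 = V_def[OF t0 lpos] and E_d9 = E_def[OF t0 lpos]
  and cc_d9 = cc_def[OF t0 lpos] and AT_d9 = AT_def[OF t0 lpos] and Jw_d9 = Jw_def[OF t0 lpos]

lemma qcc: "q * cc = q / 2 * max (2 * l - \<theta>) 0"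
  using q_gt by (auto simp: cc_d9 max_def algebra_simps)

lemma H1': "(\<integral>\<^sup>+ w. ennreal (exp (q * cc * AT w)) \<partial>M) < \<infinity>"
  using H1 by (simp add: qcc AT_d9)

lemma H3': "(\<integral>\<^sup>+ w. ennreal (enn2real (Jw w) powr p) \<partial>M) < \<infinity>"
  using H3 by (simp add: Jw_d9)

lemma AT_nonneg: "w \<in> space M \<Longrightarrow> 0 \<le> AT w"
  unfolding AT_d9 by (rule lbint_nonneg) (use a_nonneg in auto)

lemma dom_int: "(\<integral>\<^sup>+ w. (\<integral>\<^sup>+ s. phi t s w * ennreal (xx s w) \<partial>lborel) \<partial>M) < \<infinity>"
proof -
  note [measurable] = Jw_meas[OF t0 lpos] AT_meas[OF t0 lpos]
  have "(\<integral>\<^sup>+ w. (\<integral>\<^sup>+ s. phi t s w * ennreal (xx s w) \<partial>lborel) \<partial>M)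
      \<le> (\<integral>\<^sup>+ w. ennreal (l / p) * ennreal (enn2real (Jw w) powr p) + ennreal (l / q) * ennreal (exp (q * cc * AT w)) \<partial>M)"
  proof (rule nn_integral_mono_AE)
    show "AE w in M. (\<integral>\<^sup>+ s. phi t s w * ennreal (xx s w) \<partial>lborel)
        \<le> ennreal (l / p) * ennreal (enn2real (Jw w) powr p) + ennreal (l / q) * ennreal (exp (q * cc * AT w))"
      using AE_good
    proof eventually_elim
      case (elim w)
      have fin: "Jw w < \<infinity>" using elim by (simp add: good_def Jw_d9)
      define j where "j = enn2real (Jw w)"
      have j0: "0 \<le> j" by (simp add: j_def)
      have Jj: "Jw w = ennreal j" using fin by (simp add: j_def)
      have e0: "0 \<le> exp (cc * AT w)" by simp
      have "j * exp (cc * AT w) \<le> j powr p / p + exp (cc * AT w) powr q / q"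
        by (rule Youngs_inequality[OF p_gt q_gt pq j0 e0])
      also have "exp (cc * AT w) powr q = exp (q * cc * AT w)" by (simp add: exp_powr_real mult_ac)
      finally have Y0: "j * exp (cc * AT w) \<le> j powr p / p + exp (q * cc * AT w) / q" .
      have "l * (j * exp (cc * AT w)) \<le> l * (j powr p / p + exp (q * cc * AT w) / q)"
        using Y0 lpos by (intro mult_left_mono) auto
      also have "\<dots> = l / p * j powr p + l / q * exp (q * cc * AT w)" by (simp add: algebra_simps)
      finally have Y: "l * (j * exp (cc * AT w)) \<le> l / p * j powr p + l / q * exp (q * cc * AT w)" .
      have "(\<integral>\<^sup>+ s. phi t s w * ennreal (xx s w) \<partial>lborel) \<le> ennreal (l * exp (cc * AT w)) * Jw w"
        by (rule dom_w[OF t0 lpos elim])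
      also have "\<dots> = ennreal (l * (j * exp (cc * AT w)))"
        using Jj lpos j0 by (simp add: ennreal_mult[symmetric] mult_ac)
      also have "\<dots> \<le> ennreal (l / p * j powr p + l / q * exp (q * cc * AT w))"
        using Y by (rule ennreal_leI)
      also have "\<dots> = ennreal (l / p) * ennreal (j powr p) + ennreal (l / q) * ennreal (exp (q * cc * AT w))"
      proof -
        define X where "X = j powr p"
        define Z where "Z = exp (q * cc * AT w)"
        have X0: "0 \<le> X" and Z0: "0 \<le> Z" by (auto simp: X_def Z_def)
        have lp: "0 \<le> l / p" "0 \<le> l / q" using lpos p_gt q_gt by auto
        have "ennreal (l / p * X + l / q * Z) = ennreal (l / p * X) + ennreal (l / q * Z)"
          using X0 Z0 lp by (intro ennreal_plus mult_nonneg_nonneg) auto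
        also have "ennreal (l / p * X) = ennreal (l / p) * ennreal X" using X0 lp by (intro ennreal_mult) auto
        also have "ennreal (l / q * Z) = ennreal (l / q) * ennreal Z" using Z0 lp by (intro ennreal_mult) auto
        finally show ?thesis by (simp only: X_def Z_def)
      qed
      finally show ?case by (simp add: j_def)
    qed
  qed
  also have "\<dots> = ennreal (l / p) * (\<integral>\<^sup>+ w. ennreal (enn2real (Jw w) powr p) \<partial>M) + ennreal (l / q) * (\<integral>\<^sup>+ w. ennreal (exp (q * cc * AT w)) \<partial>M)"
    by (simp add: nn_integral_add nn_integral_cmult)
  also have "\<dots> < \<infinity>" using H1' H3' by (simp add: ennreal_mult_less_top less_top)
  finally show ?thesis .
qed

lemma E_ge1: assumes wM: "w \<in> space M" shows "1 \<le> E t w"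
proof -
  have "0 \<le> (LBINT s:{min t (\<tau> w)..\<tau> w}. a s w)"
  proof (rule lbint_nonneg)
    fix s assume "s \<in> {min t (\<tau> w)..\<tau> w}"
    then have "0 \<le> s" using t0 tau_nonneg wM by (auto simp: min_def split: if_splits)
    then show "0 \<le> a s w" using a_nonneg wM by auto
  qed
  then show ?thesis unfolding E_d9 using lpos by simp
qed

lemma Y_int: "(\<integral>\<^sup>+ w. ennreal (\<xi> w * E t w) \<partial>M) < \<infinity>"
proof -
  note [measurable] = AT_meas[OF t0 lpos]
  have "(\<integral>\<^sup>+ w. ennreal (\<xi> w * E t w) \<partial>M)
      \<le> (\<integral>\<^sup>+ w. ennreal (1 / p) * ennreal (exp (p / 2 * \<theta> * (LBINT s:{0..\<tau> w}. a s w)) * \<bar>\<xi> w\<bar> powr p) + ennreal (1 / q) * ennreal (exp (q * cc * AT w)) \<partial>M)"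
  proof (rule nn_integral_mono_AE)
    show "AE w in M. ennreal (\<xi> w * E t w)
        \<le> ennreal (1 / p) * ennreal (exp (p / 2 * \<theta> * (LBINT s:{0..\<tau> w}. a s w)) * \<bar>\<xi> w\<bar> powr p) + ennreal (1 / q) * ennreal (exp (q * cc * AT w))"
      using AE_good
    proof eventually_elim
      case (elim w)
      have wM: "w \<in> space M" using elim by (simp add: good_def)
      define A where "A = AT w"
      have A0: "0 \<le> A" using AT_nonneg[OF wM] by (simp add: A_def)
      have T0: "0 \<le> \<tau> w" using tau_nonneg wM by simp
      have si: "set_integrable lborel {0..\<tau> w} (\<lambda>u. a u w)" using elim T0 by (simp add: good_def)
      have D: "(LBINT s:{min t (\<tau> w)..\<tau> w}. a s w) \<le> A"
        unfolding A_def AT_d9 by (rule lbint_mono_set[OF si]) (use a_nonneg wM t0 T0 in auto)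
      have x0: "0 \<le> \<xi> w" using xi_nonneg wM by simp
      have cc0: "0 \<le> cc" and cc1: "l - \<theta> / 2 \<le> cc" by (auto simp: cc_d9)
      have "l * (LBINT s:{min t (\<tau> w)..\<tau> w}. a s w) \<le> l * A" using D lpos by (simp add: mult_left_mono)
      also have "l * A = \<theta> / 2 * A + (l - \<theta> / 2) * A" by (simp add: algebra_simps)
      also have "(l - \<theta> / 2) * A \<le> cc * A" using cc1 A0 by (rule mult_right_mono)
      finally have "l * (LBINT s:{min t (\<tau> w)..\<tau> w}. a s w) \<le> \<theta> / 2 * A + cc * A" by simp
      then have "E t w \<le> exp (\<theta> / 2 * A) * exp (cc * A)"
        unfolding E_d9 by (simp add: exp_add[symmetric])
      then have "\<xi> w * E t w \<le> (\<xi> w * exp (\<theta> / 2 * A)) * exp (cc * A)"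
        using x0 by (simp add: mult_left_mono mult.assoc)
      also have "\<dots> \<le> (\<xi> w * exp (\<theta> / 2 * A)) powr p / p + exp (cc * A) powr q / q"
        by (rule Youngs_inequality[OF p_gt q_gt pq]) (use x0 in auto)
      also have "(\<xi> w * exp (\<theta> / 2 * A)) powr p = exp (p / 2 * \<theta> * A) * \<bar>\<xi> w\<bar> powr p"
        using x0 by (simp add: powr_mult exp_powr_real mult_ac)
      also have "exp (cc * A) powr q = exp (q * cc * A)" by (simp add: exp_powr_real mult_ac)
      finally have le: "\<xi> w * E t w \<le> 1 / p * (exp (p / 2 * \<theta> * A) * \<bar>\<xi> w\<bar> powr p) + 1 / q * exp (q * cc * A)"
        by simp
      have "ennreal (\<xi> w * E t w) \<le> ennreal (1 / p * (exp (p / 2 * \<theta> * A) * \<bar>\<xi> w\<bar> powr p) + 1 / q * exp (q * cc * A))"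
        using le by (rule ennreal_leI)
      also have "\<dots> = ennreal (1 / p) * ennreal (exp (p / 2 * \<theta> * A) * \<bar>\<xi> w\<bar> powr p) + ennreal (1 / q) * ennreal (exp (q * cc * A))"
      proof -
        define X where "X = exp (p / 2 * \<theta> * A) * \<bar>\<xi> w\<bar> powr p"
        define Z where "Z = exp (q * cc * A)"
        have X0: "0 \<le> X" and Z0: "0 \<le> Z" by (auto simp: X_def Z_def)
        have "ennreal (1 / p * X + 1 / q * Z) = ennreal (1 / p * X) + ennreal (1 / q * Z)"
          using X0 Z0 p_gt q_gt by (intro ennreal_plus) auto
        also have "ennreal (1 / p * X) = ennreal (1 / p) * ennreal X" using X0 p_gt by (intro ennreal_mult) auto
        also have "ennreal (1 / q * Z) = ennreal (1 / q) * ennreal Z" using Z0 q_gt by (intro ennreal_mult) auto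
        finally show ?thesis by (simp only: X_def Z_def)
      qed
      finally show ?case by (simp add: A_def AT_d9)
    qed
  qed
  also have "\<dots> = ennreal (1 / p) * (\<integral>\<^sup>+ w. ennreal (exp (p / 2 * \<theta> * (LBINT s:{0..\<tau> w}. a s w)) * \<bar>\<xi> w\<bar> powr p) \<partial>M)
      + ennreal (1 / q) * (\<integral>\<^sup>+ w. ennreal (exp (q * cc * AT w)) \<partial>M)"
  proof -
    have "AT = (\<lambda>w. LBINT s:{0..\<tau> w}. a s w)" by (rule ext, rule AT_d9)
    then have [measurable]: "(\<lambda>w. LBINT s:{0..\<tau> w}. a s w) \<in> borel_measurable M"
      using AT_meas[OF t0 lpos] by simp
    show ?thesis by (simp add: nn_integral_add nn_integral_cmult)
  qed
  also have "\<dots> < \<infinity>" using H1' H2 by (simp add: ennreal_mult_less_top less_top)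
  finally show ?thesis .
qed

end
end

context gw begin

interpretation P: prob_space M by (rule prob)

context fixes t :: real assumes t0: "0 \<le> t" and lpos: "0 < l"
begin

lemmas W_d10 = W_def[OF t0 lpos] and phi_d10 = phi_def[OF t0 lpos] and Ifun_d10 = Ifun_def[OF t0 lpos]
  and U_d10 = U_def[OF t0 lpos] and V_d10 = V_def[OF t0 lpos] and E_d10 = E_def[OF t0 lpos]

lemma main_ineq:
  assumes B: "B \<in> sets (F t)"
  shows "(\<integral>\<^sup>+ w. indicator B w * ennreal (x t w) \<partial>M) \<le> (\<integral>\<^sup>+ w. indicator B w * ennreal (\<xi> w * E t w) \<partial>M)"
proof -
  have BM[measurable]: "B \<in> sets M" using B F_sets by auto
  note [measurable] = U_meas[OF t0 lpos] V_meas[OF t0 lpos] E_meas[OF t0 lpos]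
  define LH where "LH = (\<lambda>w. \<integral>\<^sup>+ s. phi t s w * ennreal (xx s w) \<partial>lborel)"
  define Ub where "Ub = (\<integral>\<^sup>+ w. indicator B w * U t w \<partial>M)"
  define Vb where "Vb = (\<integral>\<^sup>+ w. indicator B w * V t w \<partial>M)"
  define Zb where "Zb = (\<integral>\<^sup>+ w. indicator B w * (ennreal (\<xi> w) * ennreal (E t w - 1)) \<partial>M)"
  have a: "(\<integral>\<^sup>+ w. indicator B w * LH w \<partial>M) = Ub + Vb"
  proof -
    have "(\<integral>\<^sup>+ w. indicator B w * LH w \<partial>M) = (\<integral>\<^sup>+ w. indicator B w * U t w + indicator B w * V t w \<partial>M)"
      by (rule nn_integral_cong) (simp add: LH_def LHS_UV[OF t0 lpos] distrib_left)
    also have "\<dots> = Ub + Vb" unfolding Ub_def Vb_def by (rule nn_integral_add) auto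
    finally show ?thesis .
  qed
  have b: "(\<integral>\<^sup>+ w. indicator B w * LH w \<partial>M) \<le> Zb + Ub"
  proof -
    have "(\<integral>\<^sup>+ w. indicator B w * LH w \<partial>M)
        \<le> (\<integral>\<^sup>+ w. indicator B w * (\<integral>\<^sup>+ s. phi t s w * (ennreal (\<xi> w) + ennreal l * Ifun s w) \<partial>lborel) \<partial>M)"
      unfolding LH_def by (rule stepA_int[OF t0 lpos B])
    also have "\<dots> \<le> (\<integral>\<^sup>+ w. indicator B w * (ennreal (\<xi> w) * ennreal (E t w - 1)) + indicator B w * U t w \<partial>M)"
      using AE_good by (intro nn_integral_mono_AE, eventually_elim)
         (simp add: distrib_left[symmetric] mult_left_mono stepB_w[OF t0 lpos])
    also have "\<dots> = Zb + Ub" unfolding Zb_def Ub_def by (rule nn_integral_add) auto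
    finally show ?thesis .
  qed
  have c: "(\<integral>\<^sup>+ w. indicator B w * LH w \<partial>M) < \<infinity>"
  proof -
    have "(\<integral>\<^sup>+ w. indicator B w * LH w \<partial>M) \<le> (\<integral>\<^sup>+ w. LH w \<partial>M)"
      by (intro nn_integral_mono) (auto simp: indicator_def)
    then show ?thesis using dom_int[OF t0 lpos] unfolding LH_def by (simp add: le_less_trans)
  qed
  have Ufin: "Ub \<noteq> \<infinity>" using a c by (auto simp: top_unique)
  have "Ub + Vb \<le> Ub + Zb" using a b by (simp add: add.commute)
  then have VZ: "Vb \<le> Zb" using Ufin by (simp add: ennreal_add_left_cancel_le)
  have "(\<integral>\<^sup>+ w. indicator B w * ennreal (x t w) \<partial>M) \<le> (\<integral>\<^sup>+ w. indicator B w * (ennreal (\<xi> w) + V t w) \<partial>M)"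
    by (rule stepC[OF t0 lpos B])
  also have "\<dots> = (\<integral>\<^sup>+ w. indicator B w * ennreal (\<xi> w) \<partial>M) + Vb"
    unfolding Vb_def by (subst nn_integral_add[symmetric]) (auto simp: distrib_left)
  also have "\<dots> \<le> (\<integral>\<^sup>+ w. indicator B w * ennreal (\<xi> w) \<partial>M) + Zb" using VZ by (rule add_left_mono)
  also have "\<dots> = (\<integral>\<^sup>+ w. indicator B w * ennreal (\<xi> w * E t w) \<partial>M)"
  proof -
    have "(\<integral>\<^sup>+ w. indicator B w * ennreal (\<xi> w) \<partial>M) + Zb
        = (\<integral>\<^sup>+ w. indicator B w * ennreal (\<xi> w) + indicator B w * (ennreal (\<xi> w) * ennreal (E t w - 1)) \<partial>M)"
      unfolding Zb_def by (rule nn_integral_add[symmetric]) auto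
    also have "\<dots> = (\<integral>\<^sup>+ w. indicator B w * ennreal (\<xi> w * E t w) \<partial>M)"
    proof (rule nn_integral_cong)
      fix w assume wM: "w \<in> space M"
      have x0: "0 \<le> \<xi> w" using xi_nonneg wM by simp
      have e1: "0 \<le> E t w - 1" using E_ge1[OF t0 lpos wM] by simp
      have "ennreal (\<xi> w) + ennreal (\<xi> w) * ennreal (E t w - 1) = ennreal (\<xi> w + \<xi> w * (E t w - 1))"
        using x0 e1 by (simp add: ennreal_plus ennreal_mult)
      also have "\<xi> w + \<xi> w * (E t w - 1) = \<xi> w * E t w" by (simp add: algebra_simps)
      finally show "indicator B w * ennreal (\<xi> w) + indicator B w * (ennreal (\<xi> w) * ennreal (E t w - 1))
          = indicator B w * ennreal (\<xi> w * E t w)" by (simp add: distrib_left[symmetric])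
    qed
    finally show ?thesis .
  qed
  finally show ?thesis .
qed

lemma conclusion_pos:
  "AE w in M. x t w \<le> real_cond_exp M (F t) (\<lambda>w. \<xi> w * exp (l * (LBINT s:{min t (\<tau> w)..\<tau> w}. a s w))) w"
proof -
  have eq: "(\<lambda>w. \<xi> w * exp (l * (LBINT s:{min t (\<tau> w)..\<tau> w}. a s w))) = (\<lambda>w. \<xi> w * E t w)"
    by (simp add: E_d10)
  have "AE w in M. x t w \<le> real_cond_exp M (F t) (\<lambda>w. \<xi> w * E t w) w"
  proof (rule rce_ge[OF prob sub])
    show "x t \<in> borel_measurable (F t)" using x_adapted t0 by (simp add: adapted_def)
    show "(\<lambda>w. \<xi> w * E t w) \<in> borel_measurable M" using E_meas[OF t0 lpos] by measurable
    show "0 \<le> \<xi> w * E t w" if "w \<in> space M" for w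
      using xi_nonneg E_ge1[OF t0 lpos that] that by simp
    show "(\<integral>\<^sup>+ w. ennreal (\<xi> w * E t w) \<partial>M) < \<infinity>" by (rule Y_int[OF t0 lpos])
    show "(\<integral>\<^sup>+ w. indicator B w * ennreal (x t w) \<partial>M) \<le> (\<integral>\<^sup>+ w. indicator B w * ennreal (\<xi> w * E t w) \<partial>M)"
      if "B \<in> sets (F t)" for B using main_ineq[OF that] .
  qed
  then show ?thesis unfolding eq .
qed

end

lemma conclusion_all:
  "\<forall>t\<ge>0. AE w in M. x t w \<le> real_cond_exp M (F t) (\<lambda>w. \<xi> w * exp (l * (LBINT s:{min t (\<tau> w)..\<tau> w}. a s w))) w"
proof (intro allI impI)
  fix t :: real assume t0: "0 \<le> t"
  show "AE w in M. x t w \<le> real_cond_exp M (F t) (\<lambda>w. \<xi> w * exp (l * (LBINT s:{min t (\<tau> w)..\<tau> w}. a s w))) w"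
  proof (cases "l = 0")
    case True
    then show ?thesis using hyp t0 by simp
  next
    case False
    then have "0 < l" using l_nonneg by simp
    then show ?thesis by (rule conclusion_pos[OF t0])
  qed
qed

end

lemma bmf_props:
  assumes bm: "brownian_motion M d B"
  shows "space (bm_filtration M d B s) = space M"
    and "sets (bm_filtration M d B s) \<subseteq> sets M"
    and "s \<le> s' \<Longrightarrow> sets (bm_filtration M d B s) \<subseteq> sets (bm_filtration M d B s')"
proof -
  define S where "S u = sigma_sets (space M) (natural_sets M d B u \<union> null_sets M)" for u
  define G where "G s = (\<Inter>u\<in>{s<..}. S u)" for s :: real
  have nat_sub: "natural_sets M d B u \<subseteq> sets M" for u
    unfolding natural_sets_def
  proof (rule sets.sigma_sets_subset)
    show "{B i u' -` S \<inter> space M |i u' S. i < d \<and> 0 \<le> u' \<and> u' \<le> u \<and> S \<in> sets borel} \<subseteq> sets M"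
    proof safe
      fix i u' and Sb :: "real set" assume "i < d" "0 \<le> u'" "u' \<le> u" "Sb \<in> sets borel"
      moreover have "\<forall>i<d. \<forall>t\<ge>0. B i t \<in> borel_measurable M" using bm by (simp add: brownian_motion_def)
      ultimately show "B i u' -` Sb \<inter> space M \<in> sets M" by (auto intro: measurable_sets)
    qed
  qed
  have S_sub: "S u \<subseteq> sets M" for u
    unfolding S_def by (rule sets.sigma_sets_subset) (use nat_sub in auto)
  have G_sub: "G s \<subseteq> sets M" for s
    using S_sub[of "s + 1"] unfolding G_def by auto
  have G_pow: "G s \<subseteq> Pow (space M)" for s
    using G_sub[of s] sets.sets_into_space[of _ M] by blast
  have eq: "bm_filtration M d B s = sigma (space M) (G s)" for s
    unfolding bm_filtration_def G_def S_def by simp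
  show "space (bm_filtration M d B s) = space M" unfolding eq by (rule space_measure_of[OF G_pow])
  have sets_eq: "sets (bm_filtration M d B s) = sigma_sets (space M) (G s)" for s
    unfolding eq using G_pow by (rule sets_measure_of)
  show "sets (bm_filtration M d B s) \<subseteq> sets M"
    unfolding sets_eq by (rule sets.sigma_sets_subset[OF G_sub])
  show "sets (bm_filtration M d B s) \<subseteq> sets (bm_filtration M d B s')" if "s \<le> s'"
  proof -
    have "G s \<subseteq> G s'" using that unfolding G_def by auto
    then show ?thesis unfolding sets_eq by (rule sigma_sets_mono')
  qed
qed

theorem theorem1:
  fixes M :: "'w measure" and d :: nat and B :: "nat \<Rightarrow> real \<Rightarrow> 'w \<Rightarrow> real"
    and p q l \<epsilon> \<theta> :: real and \<tau> :: "'w \<Rightarrow> real" and \<xi> :: "'w \<Rightarrow> real"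
    and a x :: "real \<Rightarrow> 'w \<Rightarrow> real"
  defines "F \<equiv> bm_filtration M d B"
  assumes complete: "complete_measure M"
    and bm: "brownian_motion M d B" and d_pos: "0 < d"
    and p_gt: "p > 1" and l_nonneg: "l \<ge> 0" and pq: "1 / p + 1 / q = 1"
    and tau_nonneg: "\<forall>w\<in>space M. 0 \<le> \<tau> w"
    and tau_stop: "stopping_time F \<tau>"
    and xi_nonneg: "\<forall>w\<in>space M. 0 \<le> \<xi> w"
    and a_nonneg: "\<forall>t\<ge>0. \<forall>w\<in>space M. 0 \<le> a t w" and a_prog: "progressive F a"
    and x_nonneg: "\<forall>t\<ge>0. \<forall>w\<in>space M. 0 \<le> x t w" and x_prog: "progressive F x"
    and eps_pos: "\<epsilon> > 0" and a_gt_eps: "\<forall>t\<ge>0. \<forall>w\<in>space M. a t w > \<epsilon>"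
    and a_loc_int: "AE w in M. \<forall>t\<ge>0. set_integrable lborel {0..t} (\<lambda>s. a s w)"
    and theta_nonneg: "\<theta> \<ge> 0"
    and H1: "(\<integral>\<^sup>+ w. ennreal (exp (q / 2 * max (2 * l - \<theta>) 0 *
                 (LBINT s:{0..\<tau> w}. a s w))) \<partial>M) < \<infinity>"
    and xi_meas: "\<xi> \<in> borel_measurable (filtration.pre_sigma (space M) F \<tau>)"
    and H2: "(\<integral>\<^sup>+ w. ennreal (exp (p / 2 * \<theta> * (LBINT s:{0..\<tau> w}. a s w)) * \<bar>\<xi> w\<bar> powr p) \<partial>M) < \<infinity>"
    and x_cadlag: "cadlag (space M) x" and x_adapted: "adapted F x"
    and H3_fin: "AE w in M. (\<integral>\<^sup>+ t\<in>{0..\<tau> w}.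
                   ennreal (a t w * exp (\<theta> / 2 * (LBINT s:{0..t}. a s w)) * \<bar>x t w\<bar>) \<partial>lborel) < \<infinity>"
    and H3: "(\<integral>\<^sup>+ w. ennreal ((enn2real (\<integral>\<^sup>+ t\<in>{0..\<tau> w}.
                   ennreal (a t w * exp (\<theta> / 2 * (LBINT s:{0..t}. a s w)) * \<bar>x t w\<bar>) \<partial>lborel)) powr p) \<partial>M) < \<infinity>"
    and hyp: "\<forall>t\<ge>0. AE w in M. x t w \<le>
               real_cond_exp M (F t) (\<lambda>w. \<xi> w + l * (LBINT s:{min t (\<tau> w)..\<tau> w}. a s w * x s w)) w"
  shows "\<forall>t\<ge>0. AE w in M. x t w \<le>
           real_cond_exp M (F t) (\<lambda>w. \<xi> w * exp (l * (LBINT s:{min t (\<tau> w)..\<tau> w}. a s w))) w"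
proof -
  note props = bmf_props[OF bm]
  interpret gw M F \<tau> \<xi> a x p q l \<theta>
  proof (rule gw.intro)
    show "prob_space M" using bm by (simp add: brownian_motion_def)
    show "space (F s) = space M" for s unfolding F_def by (rule props(1))
    show "sets (F s) \<subseteq> sets M" for s unfolding F_def by (rule props(2))
    show "s \<le> s' \<Longrightarrow> sets (F s) \<subseteq> sets (F s')" for s s' unfolding F_def by (rule props(3))
  qed (fact assms)+
  show ?thesis by (rule conclusion_all)
qed

end
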